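(* Let $n\ge2$. Suppose there is an algorithm which, given $g,h\in H_n\rtimes S_n$, decides whether there exists $x\in H_n^*(g)$ with $x^{-1}gx=h$. Then there is an algorithm which, given $g,h\in H_n\rtimes S_n$, decides whether there exists $x\in H_n$ with $x^{-1}gx=h$.
   Context: $\mathbb{N}=\{1,2,\dots\}$, $X_n=\{1,\dots,n\}\times\mathbb{N}$, permutations act on the right. $H_n$ is the group of bijections $g$ of $X_n$ with $z_i(g)\in\mathbb{N}$, $t_i(g)\in\mathbb{Z}$ such that $(i,m)g=(i,m+t_i(g))$ for all $m\ge z_i(g)$. $S_n$ acts by $(i,m)\sigma=(i\sigma,m)$; $H_n\rtimes S_n\le\mathrm{Sym}(X_n)$ is generated by $H_n$ and these (elements given as words in a finite generating set); each $g$ is uniquely $\omega_g\sigma_g$ with $\omega_g\in H_n$, $\sigma_g\in S_n$, $t_i(g):=t_i(\omega_g)$. $[i]_g$ is the orbit of $i$ under $\langle\sigma_g\rangle$, $t_{[i]}(g)=\sum_{k\in[i]_g}t_k(g)$, $I(g)=\{i:t_{[i]}(g)\ne0\}$. With $|\sigma_g|$ the order of $\sigma_g$, $H_n^*(g)=\{x\in H_n: t_i(x)\equiv0\bmod\big||\sigma_g|\,t_{[i]}(g)\big| \text{ for all } i\in I(g)\}$. *)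

theory Defs
  imports "HOL-Library.Nat_Bijection" "HOL-Combinatorics.Permutations"
begin

datatype recf = Zero | Succ | Proj nat | Cn recf "recf list" | Pr recf recf | Mn recf

inductive reval :: "recf \<Rightarrow> nat list \<Rightarrow> nat \<Rightarrow> bool" where
  zero: "reval Zero xs 0"
| succ: "reval Succ (x # xs) (Suc x)"
| proj: "i < length xs \<Longrightarrow> reval (Proj i) xs (xs ! i)"
| cn: "list_all2 (\<lambda>g y. reval g xs y) gs ys \<Longrightarrow> reval f ys z \<Longrightarrow> reval (Cn f gs) xs z"
| pr0: "reval f xs y \<Longrightarrow> reval (Pr f g) (0 # xs) y"
| prS: "reval (Pr f g) (k # xs) y \<Longrightarrow> reval g (k # y # xs) z \<Longrightarrow> reval (Pr f g) (Suc k # xs) z"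
| mn: "reval f (k # xs) 0 \<Longrightarrow> (\<forall>m<k. \<exists>y>0. reval f (m # xs) y) \<Longrightarrow> reval (Mn f) xs k"

definition decidable_set :: "nat set \<Rightarrow> bool" where
  "decidable_set A \<longleftrightarrow> (\<exists>f. \<forall>x. reval f [x] (if x \<in> A then 1 else 0))"

text \<open>A letter (k, b) stands for the k-th generator (b = False) or its inverse (b = True).\<close>
type_synonym letter = "nat \<times> bool"

definition enc_word :: "letter list \<Rightarrow> nat" where
  "enc_word w = list_encode (map (\<lambda>(k, b). 2 * k + (if b then 1 else 0)) w)"

definition decidable_pairs :: "(letter list \<Rightarrow> letter list \<Rightarrow> bool) \<Rightarrow> bool" where
  "decidable_pairs P \<longleftrightarrow>
     decidable_set {prod_encode (enc_word w1, enc_word w2) | w1 w2. P w1 w2}"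

type_synonym pt = "nat \<times> nat"
type_synonym perm = "pt \<Rightarrow> pt"

text \<open>Permutations act on the right: the product g h is "first g, then h".\<close>
definition Xn :: "nat \<Rightarrow> pt set" where
  "Xn n = {1..n} \<times> {1..}"

definition SymX :: "nat \<Rightarrow> perm set" where
  "SymX n = {g. bij_betw g (Xn n) (Xn n) \<and> (\<forall>p. p \<notin> Xn n \<longrightarrow> g p = p)}"

definition gmul :: "perm \<Rightarrow> perm \<Rightarrow> perm" where
  "gmul g h = h \<circ> g"

definition ginv :: "nat \<Rightarrow> perm \<Rightarrow> perm" where
  "ginv n g = (\<lambda>p. if p \<in> Xn n then inv_into (Xn n) g p else p)"

definition Hn :: "nat \<Rightarrow> perm set" where
  "Hn n = {g \<in> SymX n. \<exists>z :: nat \<Rightarrow> nat. \<exists>t :: nat \<Rightarrow> int.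
             \<forall>i \<in> {1..n}. \<forall>m. 1 \<le> m \<and> z i \<le> m \<longrightarrow> g (i, m) = (i, nat (int m + t i))}"

definition tH :: "perm \<Rightarrow> nat \<Rightarrow> int" where
  "tH g i = (THE t. \<exists>z. \<forall>m. 1 \<le> m \<and> z \<le> m \<longrightarrow> g (i, m) = (i, nat (int m + t)))"

definition sact :: "nat \<Rightarrow> (nat \<Rightarrow> nat) \<Rightarrow> perm" where
  "sact n \<sigma> = (\<lambda>p. if p \<in> Xn n then (\<sigma> (fst p), snd p) else p)"

text \<open>H_n \<rtimes> S_n = { omega sigma : omega in H_n, sigma in S_n }
  (the subgroup of Sym(X_n) generated by H_n and S_n, as H_n is normalised by S_n).\<close>
definition Gn :: "nat \<Rightarrow> perm set" where
  "Gn n = {gmul \<omega> (sact n \<sigma>) | \<omega> \<sigma>. \<omega> \<in> Hn n \<and> \<sigma> permutes {1..n}}"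

definition sigma_of :: "nat \<Rightarrow> perm \<Rightarrow> (nat \<Rightarrow> nat)" where
  "sigma_of n g = (THE \<sigma>. \<sigma> permutes {1..n} \<and> (\<exists>\<omega> \<in> Hn n. g = gmul \<omega> (sact n \<sigma>)))"

definition omega_of :: "nat \<Rightarrow> perm \<Rightarrow> perm" where
  "omega_of n g = (THE \<omega>. \<omega> \<in> Hn n \<and> g = gmul \<omega> (sact n (sigma_of n g)))"

definition tG :: "nat \<Rightarrow> perm \<Rightarrow> nat \<Rightarrow> int" where
  "tG n g i = tH (omega_of n g) i"

definition orb :: "nat \<Rightarrow> perm \<Rightarrow> nat \<Rightarrow> nat set" where
  "orb n g i = {(sigma_of n g ^^ k) i | k. True}"

definition t_orb :: "nat \<Rightarrow> perm \<Rightarrow> nat \<Rightarrow> int" where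
  "t_orb n g i = (\<Sum>k \<in> orb n g i. tG n g k)"

definition Iset :: "nat \<Rightarrow> perm \<Rightarrow> nat set" where
  "Iset n g = {i \<in> {1..n}. t_orb n g i \<noteq> 0}"

definition perm_order :: "(nat \<Rightarrow> nat) \<Rightarrow> nat" where
  "perm_order \<sigma> = (LEAST k. 0 < k \<and> \<sigma> ^^ k = id)"

definition Hstar :: "nat \<Rightarrow> perm \<Rightarrow> perm set" where
  "Hstar n g = {x \<in> Hn n. \<forall>i \<in> Iset n g.
      \<bar>int (perm_order (sigma_of n g)) * t_orb n g i\<bar> dvd tH x i}"

definition valid_word :: "perm list \<Rightarrow> letter list \<Rightarrow> bool" where
  "valid_word gens w \<longleftrightarrow> (\<forall>(k, b) \<in> set w. k < length gens)"

definition word_eval :: "nat \<Rightarrow> perm list \<Rightarrow> letter list \<Rightarrow> perm" where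
  "word_eval n gens w =
     foldl (\<lambda>acc (k, b). gmul acc (if b then ginv n (gens ! k) else gens ! k)) id w"

definition generating_list :: "nat \<Rightarrow> perm list \<Rightarrow> bool" where
  "generating_list n gens \<longleftrightarrow> set gens \<subseteq> Gn n \<and>
     (\<forall>g \<in> Gn n. \<exists>w. valid_word gens w \<and> word_eval n gens w = g)"

end

theory Submission
  imports Defs
begin


definition rf :: "nat \<Rightarrow> (nat list \<Rightarrow> nat) \<Rightarrow> bool" where
  "rf k f \<longleftrightarrow> (\<exists>F. \<forall>xs. length xs = k \<longrightarrow> reval F xs (f xs))"

lemma rf_cong: "rf k f \<Longrightarrow> (\<And>xs. length xs = k \<Longrightarrow> f xs = g xs) \<Longrightarrow> rf k g"
  unfolding rf_def by metis

lemma rf_proj: "i < k \<Longrightarrow> rf k (\<lambda>xs. xs ! i)"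
  unfolding rf_def by (auto intro!: exI[of _ "Proj i"] reval.proj)

lemma rf_zero: "rf k (\<lambda>_. 0)"
  unfolding rf_def by (auto intro!: exI[of _ Zero] reval.zero)

lemma rf_list: "(\<forall>g\<in>set gs. rf k g) \<Longrightarrow>
  \<exists>Gs. length Gs = length gs \<and> (\<forall>xs. length xs = k \<longrightarrow> list_all2 (\<lambda>G y. reval G xs y) Gs (map (\<lambda>g. g xs) gs))"
proof (induction gs)
  case Nil then show ?case by auto
next
  case (Cons g gs)
  then obtain Gs where Gs: "length Gs = length gs" "\<forall>xs. length xs = k \<longrightarrow> list_all2 (\<lambda>G y. reval G xs y) Gs (map (\<lambda>g. g xs) gs)" by auto
  from Cons.prems obtain G where "\<forall>xs. length xs = k \<longrightarrow> reval G xs (g xs)" unfolding rf_def by auto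
  with Gs show ?case by (intro exI[of _ "G # Gs"]) auto
qed

lemma rf_comp: "rf m f \<Longrightarrow> length gs = m \<Longrightarrow> (\<forall>g\<in>set gs. rf k g) \<Longrightarrow>
   rf k (\<lambda>xs. f (map (\<lambda>g. g xs) gs))"
proof -
  assume f: "rf m f" and l: "length gs = m" and gs: "\<forall>g\<in>set gs. rf k g"
  from f obtain F where F: "\<forall>xs. length xs = m \<longrightarrow> reval F xs (f xs)" unfolding rf_def by auto
  from rf_list[OF gs] obtain Gs where Gs: "length Gs = length gs" "\<forall>xs. length xs = k \<longrightarrow> list_all2 (\<lambda>G y. reval G xs y) Gs (map (\<lambda>g. g xs) gs)" by auto
  show ?thesis unfolding rf_def
    by (rule exI[of _ "Cn F Gs"]) (use F Gs l in \<open>auto intro!: reval.cn\<close>)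
qed

lemma rf_comp1: "rf (Suc 0) f \<Longrightarrow> rf k g \<Longrightarrow> rf k (\<lambda>xs. f [g xs])"
  using rf_comp[of "Suc 0" f "[g]" k] by simp
lemma rf_comp2: "rf (Suc (Suc 0)) f \<Longrightarrow> rf k g \<Longrightarrow> rf k h \<Longrightarrow> rf k (\<lambda>xs. f [g xs, h xs])"
  using rf_comp[of "Suc (Suc 0)" f "[g,h]" k] by simp

lemma rf_succ: "rf k f \<Longrightarrow> rf k (\<lambda>xs. Suc (f xs))"
proof -
  have "rf 1 (\<lambda>xs. Suc (xs ! 0))" unfolding rf_def
    by (rule exI[of _ Succ]) (auto simp: length_Suc_conv intro: reval.succ)
  then show "rf k f \<Longrightarrow> ?thesis" using rf_comp1[of "\<lambda>xs. Suc (xs!0)"] by auto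
qed

lemma rf_const: "rf k (\<lambda>_. c)"
  by (induction c) (auto intro: rf_zero rf_succ)

primrec prr :: "(nat list \<Rightarrow> nat) \<Rightarrow> (nat list \<Rightarrow> nat) \<Rightarrow> nat \<Rightarrow> nat list \<Rightarrow> nat" where
  "prr f g 0 ys = f ys"
| "prr f g (Suc n) ys = g (n # prr f g n ys # ys)"

lemma rf_pr: "rf k f \<Longrightarrow> rf (Suc (Suc k)) g \<Longrightarrow> rf (Suc k) (\<lambda>xs. prr f g (hd xs) (tl xs))"
proof -
  assume "rf k f" "rf (Suc (Suc k)) g"
  then obtain F G where F: "\<forall>xs. length xs = k \<longrightarrow> reval F xs (f xs)"
    and G: "\<forall>xs. length xs = Suc (Suc k) \<longrightarrow> reval G xs (g xs)" unfolding rf_def by auto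
  have "reval (Pr F G) (n # ys) (prr f g n ys)" if "length ys = k" for n ys
    by (induction n) (use F G that in \<open>auto intro: reval.pr0 reval.prS\<close>)
  then show ?thesis unfolding rf_def
    by (intro exI[of _ "Pr F G"]) (auto simp: length_Suc_conv)
qed

lemma rf_mn: "rf (Suc k) f \<Longrightarrow> (\<And>xs. length xs = k \<Longrightarrow> \<exists>m. f (m # xs) = 0) \<Longrightarrow>
   rf k (\<lambda>xs. LEAST m. f (m # xs) = 0)"
proof -
  assume "rf (Suc k) f" and ex: "\<And>xs. length xs = k \<Longrightarrow> \<exists>m. f (m # xs) = 0"
  then obtain F where F: "\<forall>xs. length xs = Suc k \<longrightarrow> reval F xs (f xs)" unfolding rf_def by auto
  show ?thesis unfolding rf_def
  proof (intro exI[of _ "Mn F"] allI impI)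
    fix xs :: "nat list" assume l: "length xs = k"
    let ?m = "LEAST m. f (m # xs) = 0"
    from ex[OF l] have z: "f (?m # xs) = 0" by (rule LeastI_ex)
    have "\<forall>m<?m. \<exists>y>0. reval F (m # xs) y"
    proof (intro allI impI)
      fix m assume "m < ?m"
      then have "f (m # xs) \<noteq> 0" using not_less_Least by blast
      moreover have "reval F (m # xs) (f (m # xs))" using F l by simp
      ultimately show "\<exists>y>0. reval F (m # xs) y" by blast
    qed
    moreover have "reval F (?m # xs) 0" using F l z by (metis length_Cons)
    ultimately show "reval (Mn F) xs ?m" by (rule reval.mn[rotated])
  qed
qed

lemma rf_iter: "rf k init \<Longrightarrow> rf (Suc (Suc k)) step \<Longrightarrow>
  rf (Suc k) (\<lambda>xs. prr init step (xs!0) (tl xs))"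
  by (rule rf_cong[OF rf_pr]) (auto simp: length_Suc_conv)

lemma rf_p1: "rf (Suc (Suc k)) (\<lambda>ys. ys!1)" by (rule rf_proj) simp
lemma rf_p2: "rf (Suc (Suc (Suc k))) (\<lambda>ys. ys!2)" by (rule rf_proj) simp
lemma rf_p0: "rf (Suc k) (\<lambda>ys. ys!0)" by (rule rf_proj) simp

lemma rf_add0: "rf (Suc (Suc 0)) (\<lambda>xs. xs!0 + xs!1)"
proof -
  have A: "rf (Suc (Suc 0)) (\<lambda>xs. prr (\<lambda>ys. ys!0) (\<lambda>ys. Suc (ys!1)) (hd xs) (tl xs))"
    by (rule rf_pr[OF rf_p0 rf_succ[OF rf_p1]])
  have B: "prr (\<lambda>ys. ys!0) (\<lambda>ys. Suc (ys!1)) n ys = n + ys!0" for n ys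
    by (induction n) auto
  show ?thesis by (rule rf_cong[OF A]) (simp only: B, auto simp: length_Suc_conv)
qed

lemma rf_add: "rf k f \<Longrightarrow> rf k g \<Longrightarrow> rf k (\<lambda>xs. f xs + g xs)"
  using rf_comp2[OF rf_add0] by auto


lemma rf_mult0: "rf (Suc (Suc 0)) (\<lambda>xs. xs!0 * xs!1)"
proof -
  have A: "rf (Suc (Suc 0)) (\<lambda>xs. prr (\<lambda>ys. 0) (\<lambda>ys. ys!1 + ys!2) (hd xs) (tl xs))"
    by (rule rf_pr[OF rf_zero rf_add[OF rf_p1 rf_p2]])
  have B: "prr (\<lambda>ys. 0) (\<lambda>ys. ys!1 + ys!2) n ys = n * ys!0" for n ys
    by (induction n) auto
  show ?thesis by (rule rf_cong[OF A]) (simp only: B, auto simp: length_Suc_conv)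
qed

lemma rf_mult: "rf k f \<Longrightarrow> rf k g \<Longrightarrow> rf k (\<lambda>xs. f xs * g xs)"
  using rf_comp2[OF rf_mult0] by auto

lemma rf_pred0: "rf (Suc 0) (\<lambda>xs. xs!0 - 1)"
proof -
  have A: "rf (Suc 0) (\<lambda>xs. prr (\<lambda>ys. 0) (\<lambda>ys. ys!0) (hd xs) (tl xs))"
    by (rule rf_pr[OF rf_zero rf_p0])
  have B: "prr (\<lambda>ys. 0) (\<lambda>ys. ys!0) n ys = n - 1" for n ys
    by (induction n) auto
  show ?thesis by (rule rf_cong[OF A]) (simp only: B, auto simp: length_Suc_conv)
qed

lemma rf_pred: "rf k f \<Longrightarrow> rf k (\<lambda>xs. f xs - 1)"
  using rf_comp1[OF rf_pred0] by simp

lemma rf_sub0: "rf (Suc (Suc 0)) (\<lambda>xs. xs!1 - xs!0)"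
proof -
  have A: "rf (Suc (Suc 0)) (\<lambda>xs. prr (\<lambda>ys. ys!0) (\<lambda>ys. ys!1 - 1) (hd xs) (tl xs))"
    by (rule rf_pr[OF rf_p0 rf_pred[OF rf_p1]])
  have B: "prr (\<lambda>ys. ys!0) (\<lambda>ys. ys!1 - 1) n ys = ys!0 - n" for n ys
    by (induction n) auto
  show ?thesis by (rule rf_cong[OF A]) (simp only: B, auto simp: length_Suc_conv)
qed

lemma rf_sub: "rf k f \<Longrightarrow> rf k g \<Longrightarrow> rf k (\<lambda>xs. f xs - g xs)"
  using rf_comp2[OF rf_sub0, of k g f] by auto

lemma rf_if: "rf k c \<Longrightarrow> rf k f \<Longrightarrow> rf k g \<Longrightarrow> rf k (\<lambda>xs. if c xs = 0 then f xs else g xs)"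
proof -
  assume "rf k c" "rf k f" "rf k g"
  then have "rf k (\<lambda>xs. f xs * (1 - c xs) + g xs * (1 - (1 - c xs)))"
    by (intro rf_add rf_mult rf_sub rf_const)
  then show ?thesis by (rule rf_cong) auto
qed

lemma rf_le: "rf k f \<Longrightarrow> rf k g \<Longrightarrow> rf k a \<Longrightarrow> rf k b \<Longrightarrow> rf k (\<lambda>xs. if f xs \<le> g xs then a xs else b xs)"
proof -
  assume "rf k f" "rf k g" "rf k a" "rf k b"
  then have "rf k (\<lambda>xs. if f xs - g xs = 0 then a xs else b xs)"
    by (intro rf_if rf_sub)
  then show ?thesis by (rule rf_cong) auto
qed

lemma rf_pow: "rf k f \<Longrightarrow> rf k g \<Longrightarrow> rf k (\<lambda>xs. f xs ^ g xs)"
proof -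
  have A: "rf (Suc (Suc 0)) (\<lambda>xs. prr (\<lambda>ys. 1) (\<lambda>ys. ys!1 * ys!2) (hd xs) (tl xs))"
    by (rule rf_pr[OF rf_const rf_mult[OF rf_p1 rf_p2]])
  have B: "prr (\<lambda>ys. 1) (\<lambda>ys. ys!1 * ys!2) n ys = ys!0 ^ n" for n ys
    by (induction n) auto
  have "rf (Suc (Suc 0)) (\<lambda>xs. xs!1 ^ xs!0)" by (rule rf_cong[OF A]) (simp only: B, auto simp: length_Suc_conv)
  then show "rf k f \<Longrightarrow> rf k g \<Longrightarrow> ?thesis" using rf_comp2[of "\<lambda>xs. xs!1 ^ xs!0" k g f] by auto
qed

lemma rf_tri: "rf k f \<Longrightarrow> rf k (\<lambda>xs. triangle (f xs))"
proof -
  have A: "rf (Suc 0) (\<lambda>xs. prr (\<lambda>ys. 0) (\<lambda>ys. ys!1 + Suc (ys!0)) (hd xs) (tl xs))"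
    by (rule rf_pr[OF rf_zero rf_add[OF rf_p1 rf_succ[OF rf_p0]]])
  have B: "prr (\<lambda>ys. 0) (\<lambda>ys. ys!1 + Suc (ys!0)) n ys = triangle n" for n ys
    by (induction n) auto
  have "rf (Suc 0) (\<lambda>xs. triangle (xs!0))" by (rule rf_cong[OF A]) (simp only: B, auto simp: length_Suc_conv)
  then show "rf k f \<Longrightarrow> ?thesis" using rf_comp1[of "\<lambda>xs. triangle (xs!0)" k f] by simp
qed

lemma rf_pe: "rf k f \<Longrightarrow> rf k g \<Longrightarrow> rf k (\<lambda>xs. prod_encode (f xs, g xs))"
  unfolding prod_encode_def by (simp add: rf_add rf_tri)



lemma rf_comp3: "rf (Suc (Suc (Suc 0))) f \<Longrightarrow> rf k g \<Longrightarrow> rf k h \<Longrightarrow> rf k u \<Longrightarrow> rf k (\<lambda>xs. f [g xs, h xs, u xs])"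
  using rf_comp[of "Suc (Suc (Suc 0))" f "[g,h,u]" k] by simp

lemma rf_pI: "i < k \<Longrightarrow> rf k (\<lambda>ys. ys!i)" by (rule rf_proj)

definition sqr :: "nat \<Rightarrow> nat" where "sqr z = (LEAST s. z < triangle (Suc s))"

lemma prod_decode_sqr: "prod_decode z = (z - triangle (sqr z), sqr z - (z - triangle (sqr z)))"
proof -
  let ?s = "sqr z"
  have ex: "z < triangle (Suc z)" by (induction z) auto
  have 1: "z < triangle (Suc ?s)" unfolding sqr_def by (rule LeastI[where P="\<lambda>s. z < triangle (Suc s)", OF ex])
  have 2: "triangle ?s \<le> z"
  proof (cases ?s)
    case 0 then show ?thesis by simp
  next
    case (Suc s')
    then have "s' < ?s" by simp
    then have "\<not> z < triangle (Suc s')" unfolding sqr_def by (rule not_less_Least)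
    then show ?thesis using Suc by simp
  qed
  define a where "a = z - triangle ?s"
  define b where "b = ?s - a"
  have "a \<le> ?s" using 1 2 unfolding a_def by simp
  then have "a + b = ?s" unfolding b_def by simp
  then have "prod_encode (a, b) = z" unfolding prod_encode_def using 2 a_def by simp
  then have "prod_decode z = (a, b)" by (metis prod_encode_inverse)
  then show ?thesis unfolding a_def b_def by simp
qed

lemma rf_sqr0: "rf (Suc 0) (\<lambda>xs. sqr (xs!0))"
proof -
  have A: "rf (Suc (Suc 0)) (\<lambda>ys. if triangle (Suc (ys!0)) \<le> ys!1 then 1 else 0)"
    by (rule rf_le[OF rf_tri[OF rf_succ[OF rf_p0]] rf_p1 rf_const rf_const])
  have B: "rf (Suc 0) (\<lambda>xs. LEAST m. (\<lambda>ys. if triangle (Suc (ys!0)) \<le> ys!1 then 1 else 0) (m # xs) = (0::nat))"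
  proof (rule rf_mn[OF A])
    fix xs :: "nat list" assume "length xs = Suc 0"
    have "xs!0 < triangle (Suc (xs!0))" by (induction "xs!0") auto
    then show "\<exists>m. (\<lambda>ys. if triangle (Suc (ys!0)) \<le> ys!1 then 1 else 0) (m # xs) = (0::nat)"
      by (intro exI[of _ "xs!0"]) auto
  qed
  show ?thesis by (rule rf_cong[OF B]) (auto simp: sqr_def not_le)
qed

lemma rf_fst: "rf k f \<Longrightarrow> rf k (\<lambda>xs. fst (prod_decode (f xs)))"
proof -
  have "rf (Suc 0) (\<lambda>xs. xs!0 - triangle (sqr (xs!0)))"
    by (rule rf_sub[OF rf_p0 rf_tri[OF rf_sqr0]])
  then have "rf (Suc 0) (\<lambda>xs. fst (prod_decode (xs!0)))" by (simp add: prod_decode_sqr)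
  then show "rf k f \<Longrightarrow> ?thesis" using rf_comp1[of "\<lambda>xs. fst (prod_decode (xs!0))" k f] by simp
qed

lemma rf_snd: "rf k f \<Longrightarrow> rf k (\<lambda>xs. snd (prod_decode (f xs)))"
proof -
  have "rf (Suc 0) (\<lambda>xs. sqr (xs!0) - (xs!0 - triangle (sqr (xs!0))))"
    by (rule rf_sub[OF rf_sqr0 rf_sub[OF rf_p0 rf_tri[OF rf_sqr0]]])
  then have "rf (Suc 0) (\<lambda>xs. snd (prod_decode (xs!0)))" by (simp add: prod_decode_sqr)
  then show "rf k f \<Longrightarrow> ?thesis" using rf_comp1[of "\<lambda>xs. snd (prod_decode (xs!0))" k f] by simp
qed

definition hdc :: "nat \<Rightarrow> nat" where "hdc p = fst (prod_decode (p - 1))"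
definition tlc :: "nat \<Rightarrow> nat" where "tlc p = snd (prod_decode (p - 1))"

lemma hdc_enc[simp]: "hdc (list_encode (x # xs)) = x" by (simp add: hdc_def)
lemma tlc_enc[simp]: "tlc (list_encode (x # xs)) = list_encode xs" by (simp add: tlc_def)
lemma hdc_enc'[simp]: "hdc (Suc (prod_encode (x, y))) = x" by (simp add: hdc_def)
lemma tlc_enc'[simp]: "tlc (Suc (prod_encode (x, y))) = y" by (simp add: tlc_def)
lemma tlc_0[simp]: "tlc 0 = 0" by (simp add: tlc_def prod_decode_def prod_decode_aux.simps)

lemma rf_hdc: "rf k f \<Longrightarrow> rf k (\<lambda>xs. hdc (f xs))"
  unfolding hdc_def by (intro rf_fst rf_pred)
lemma rf_tlc: "rf k f \<Longrightarrow> rf k (\<lambda>xs. tlc (f xs))"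
  unfolding tlc_def by (intro rf_snd rf_pred)

lemma tlc_pow: "(tlc ^^ k) (list_encode xs) = list_encode (drop k xs)"
proof (induction k arbitrary: xs)
  case 0 then show ?case by simp
next
  case (Suc k)
  show ?case
  proof (cases xs)
    case Nil
    have "(tlc ^^ k) 0 = 0" by (induction k) auto
    then show ?thesis using Nil by (simp add: funpow_Suc_right del: funpow.simps)
  next
    case (Cons y ys)
    have "tlc (list_encode xs) = list_encode ys" by (simp only: Cons tlc_enc)
    then show ?thesis using Suc Cons by (simp add: funpow_Suc_right del: funpow.simps list_encode.simps)
  qed
qed

lemma rf_tlcpow: "rf k f \<Longrightarrow> rf k g \<Longrightarrow> rf k (\<lambda>xs. (tlc ^^ (f xs)) (g xs))"
proof -
  have A: "rf (Suc (Suc 0)) (\<lambda>xs. prr (\<lambda>ys. ys!0) (\<lambda>ys. tlc (ys!1)) (hd xs) (tl xs))"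
    by (rule rf_pr[OF rf_p0 rf_tlc[OF rf_p1]])
  have B: "prr (\<lambda>ys. ys!0) (\<lambda>ys. tlc (ys!1)) n ys = (tlc ^^ n) (ys!0)" for n ys
    by (induction n) auto
  have "rf (Suc (Suc 0)) (\<lambda>xs. (tlc ^^ (xs!0)) (xs!1))"
    by (rule rf_cong[OF A]) (simp only: B, auto simp: length_Suc_conv)
  then show "rf k f \<Longrightarrow> rf k g \<Longrightarrow> ?thesis" using rf_comp2[of "\<lambda>xs. (tlc ^^ (xs!0)) (xs!1)" k f g] by simp
qed

definition lenc :: "nat \<Rightarrow> nat" where "lenc p = (LEAST k. (tlc ^^ k) p = 0)"

lemma lenc_enc[simp]: "lenc (list_encode xs) = length xs"
proof -
  have "(tlc ^^ k) (list_encode xs) = 0 \<longleftrightarrow> length xs \<le> k" for k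
    by (simp add: tlc_pow) (metis list_encode.simps(1) list_encode_inverse list_decode.simps(1) drop_eq_Nil)
  then show ?thesis unfolding lenc_def by (intro Least_equality) auto
qed

lemma rf_lenc: "rf k f \<Longrightarrow> rf k (\<lambda>xs. lenc (f xs))"
proof -
  have B: "rf (Suc 0) (\<lambda>xs. LEAST m. (\<lambda>ys. (tlc ^^ (ys!0)) (ys!1)) (m # xs) = 0)"
  proof (rule rf_mn[OF rf_tlcpow[OF rf_p0 rf_p1]])
    fix xs :: "nat list" assume "length xs = Suc 0"
    have "(tlc ^^ length (list_decode (xs!0))) (xs!0) = 0"
      by (metis tlc_pow list_decode_inverse drop_all order_refl list_encode.simps(1))
    then show "\<exists>m. (\<lambda>ys. (tlc ^^ (ys!0)) (ys!1)) (m # xs) = 0" by auto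
  qed
  have "rf (Suc 0) (\<lambda>xs. lenc (xs!0))" by (rule rf_cong[OF B]) (simp add: lenc_def)
  then show "rf k f \<Longrightarrow> ?thesis" using rf_comp1[of "\<lambda>xs. lenc (xs!0)" k f] by simp
qed

definition apstep :: "nat list \<Rightarrow> nat" where
  "apstep ys = Suc (prod_encode (hdc ((tlc ^^ (lenc (ys!3) - Suc (ys!0))) (ys!3)), ys!1))"

definition appc :: "nat \<Rightarrow> nat \<Rightarrow> nat" where
  "appc p q = prr (\<lambda>ys. ys!0) apstep (lenc p) [q, p]"

lemma apc_correct: "n \<le> length xs \<Longrightarrow>
   prr (\<lambda>ys. ys!0) apstep n [list_encode ys0, list_encode xs] = list_encode (drop (length xs - n) xs @ ys0)"
proof (induction n)
  case 0 then show ?case by simp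
next
  case (Suc n)
  then have n: "n < length xs" by simp
  have d: "drop (length xs - Suc n) xs = xs ! (length xs - Suc n) # drop (length xs - n) xs"
  proof -
    have e: "length xs - n = Suc (length xs - Suc n)" using n by simp
    have "length xs - Suc n < length xs" using n by simp
    then show ?thesis unfolding e by (rule Cons_nth_drop_Suc[symmetric])
  qed
  have h: "hdc ((tlc ^^ (length xs - Suc n)) (list_encode xs)) = xs ! (length xs - Suc n)"
    using d by (simp add: tlc_pow del: list_encode.simps)
  have "prr (\<lambda>ys. ys!0) apstep (Suc n) [list_encode ys0, list_encode xs]
     = Suc (prod_encode (xs ! (length xs - Suc n), list_encode (drop (length xs - n) xs @ ys0)))"
  proof -
    have "prr (\<lambda>ys. ys!0) apstep (Suc n) [list_encode ys0, list_encode xs] =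
      apstep [n, list_encode (drop (length xs - n) xs @ ys0), list_encode ys0, list_encode xs]"
      using Suc.IH n by simp
    also have "\<dots> = Suc (prod_encode (xs ! (length xs - Suc n), list_encode (drop (length xs - n) xs @ ys0)))"
      using h by (simp add: apstep_def del: list_encode.simps)
    finally show ?thesis .
  qed
  then show ?case by (simp add: d)
qed

lemma appc_enc[simp]: "appc (list_encode xs) (list_encode ys) = list_encode (xs @ ys)"
  unfolding appc_def using apc_correct[of "length xs" xs ys] by simp

lemma rf_p3: "rf (Suc (Suc (Suc (Suc k)))) (\<lambda>ys. ys!3)" by (rule rf_proj) simp

lemma rf_appc: "rf k f \<Longrightarrow> rf k g \<Longrightarrow> rf k (\<lambda>xs. appc (f xs) (g xs))"
proof -
  have S: "rf (Suc (Suc (Suc (Suc 0)))) apstep"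
    unfolding apstep_def[abs_def]
    by (rule rf_succ[OF rf_pe[OF rf_hdc[OF rf_tlcpow[OF rf_sub[OF rf_lenc[OF rf_p3] rf_succ[OF rf_p0]] rf_p3]] rf_p1]])
  have A: "rf (Suc (Suc (Suc 0))) (\<lambda>xs. prr (\<lambda>ys. ys!0) apstep (hd xs) (tl xs))"
    by (rule rf_pr[OF rf_p0 S])
  have "rf (Suc (Suc 0)) (\<lambda>xs. (\<lambda>xs. prr (\<lambda>ys. ys!0) apstep (hd xs) (tl xs)) [lenc (xs!0), xs!1, xs!0])"
    by (rule rf_comp3[OF A rf_lenc[OF rf_p0] rf_p1 rf_p0])
  then have "rf (Suc (Suc 0)) (\<lambda>xs. appc (xs!0) (xs!1))" by (simp add: appc_def)
  then show "rf k f \<Longrightarrow> rf k g \<Longrightarrow> ?thesis" using rf_comp2[of "\<lambda>xs. appc (xs!0) (xs!1)" k f g] by simp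
qed

lemma rf_shift: "rf (Suc k) step \<Longrightarrow> rf (Suc (Suc k)) (\<lambda>ys. step (ys!1 # tl (tl ys)))"
proof -
  assume st: "rf (Suc k) step"
  let ?gs = "(\<lambda>ys. ys!1) # map (\<lambda>i ys. ys!(i+2)) [0..<k]"
  have R: "rf (Suc (Suc k)) (\<lambda>ys. step (map (\<lambda>g. g ys) ?gs))"
  proof (rule rf_comp[OF st])
    show "length ?gs = Suc k" by simp
    show "\<forall>g\<in>set ?gs. rf (Suc (Suc k)) g"
    proof
      fix g :: "nat list \<Rightarrow> nat" assume "g \<in> set ?gs"
      then consider "g = (\<lambda>ys. ys!1)" | i where "i < k" "g = (\<lambda>ys. ys!(i+2))" by auto
      then show "rf (Suc (Suc k)) g"
      proof cases
        case 1 then show ?thesis using rf_p1 by simp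
      next
        case 2 then show ?thesis using rf_pI[of "i+2" "Suc (Suc k)"] by simp
      qed
    qed
  qed
  have M: "map (\<lambda>g. g ys) ?gs = ys!1 # tl (tl ys)" if l: "length ys = Suc (Suc k)" for ys
  proof -
    obtain a b zs where ys: "ys = a # b # zs" and "length zs = k" using l unfolding length_Suc_conv by blast
    have "map (\<lambda>i. zs ! i) [0..<k] = zs" using \<open>length zs = k\<close> map_nth by blast
    then show ?thesis using ys by (simp add: comp_def)
  qed
  show ?thesis by (rule rf_cong[OF R]) (simp only: M)
qed

lemma rf_funpow: "rf (Suc k) step \<Longrightarrow> rf k init \<Longrightarrow>
  rf (Suc k) (\<lambda>xs. ((\<lambda>a. step (a # tl xs)) ^^ (hd xs)) (init (tl xs)))"
proof -
  assume st: "rf (Suc k) step" and i: "rf k init"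
  have A: "rf (Suc k) (\<lambda>xs. prr init (\<lambda>ys. step (ys!1 # tl (tl ys))) (hd xs) (tl xs))"
    by (rule rf_pr[OF i rf_shift[OF st]])
  have B: "prr init (\<lambda>ys. step (ys!1 # tl (tl ys))) n ps = ((\<lambda>a. step (a # ps)) ^^ n) (init ps)" for n ps
    by (induction n) auto
  show ?thesis by (rule rf_cong[OF A]) (simp only: B)
qed


lemma Xn_iff: "(i, m) \<in> Xn n \<longleftrightarrow> 1 \<le> i \<and> i \<le> n \<and> 1 \<le> m"
  by (auto simp: Xn_def)

lemma SymX_bij: "g \<in> SymX n \<Longrightarrow> bij_betw g (Xn n) (Xn n)" by (simp add: SymX_def)
lemma SymX_out: "g \<in> SymX n \<Longrightarrow> p \<notin> Xn n \<Longrightarrow> g p = p" unfolding SymX_def by blast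
lemma SymX_in: "g \<in> SymX n \<Longrightarrow> p \<in> Xn n \<Longrightarrow> g p \<in> Xn n"
  using SymX_bij bij_betwE by blast

lemma gmul_eq: "gmul g h = h \<circ> g" by (simp add: gmul_def)

lemma id_SymX[simp]: "id \<in> SymX n" by (simp add: SymX_def bij_betw_id)

lemma comp_SymX: "g \<in> SymX n \<Longrightarrow> h \<in> SymX n \<Longrightarrow> h \<circ> g \<in> SymX n"
  unfolding SymX_def by (auto intro: bij_betw_trans)

lemma ginv_left: "g \<in> SymX n \<Longrightarrow> ginv n g \<circ> g = id"
proof
  fix p assume g: "g \<in> SymX n"
  show "(ginv n g \<circ> g) p = id p"
  proof (cases "p \<in> Xn n")
    case True
    then have "g p \<in> Xn n" using SymX_in g by blast
    moreover have "inv_into (Xn n) g (g p) = p" using True g SymX_bij bij_betw_imp_inj_on inv_into_f_f by metis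
    ultimately show ?thesis by (simp add: ginv_def)
  next
    case False then show ?thesis using SymX_out[OF g False] by (simp add: ginv_def False)
  qed
qed

lemma ginv_right: "g \<in> SymX n \<Longrightarrow> g \<circ> ginv n g = id"
proof
  fix p assume g: "g \<in> SymX n"
  show "(g \<circ> ginv n g) p = id p"
  proof (cases "p \<in> Xn n")
    case True
    then have "g (inv_into (Xn n) g p) = p" using g SymX_bij
      by (metis bij_betw_imp_surj_on f_inv_into_f)
    then show ?thesis using True by (simp add: ginv_def)
  next
    case False then show ?thesis using SymX_out[OF g False] by (simp add: ginv_def False)
  qed
qed

lemma ginv_SymX: "g \<in> SymX n \<Longrightarrow> ginv n g \<in> SymX n"
proof -
  assume g: "g \<in> SymX n"
  have "bij_betw (inv_into (Xn n) g) (Xn n) (Xn n)" using g SymX_bij bij_betw_inv_into by blast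
  then have "bij_betw (ginv n g) (Xn n) (Xn n)"
    by (rule bij_betw_cong[THEN iffD1, rotated]) (simp add: ginv_def)
  then show ?thesis by (simp add: SymX_def ginv_def)
qed

lemma ginv_unique: "g \<in> SymX n \<Longrightarrow> q \<circ> g = id \<Longrightarrow> ginv n g = q"
proof -
  assume g: "g \<in> SymX n" and q: "q \<circ> g = id"
  have "q = q \<circ> (g \<circ> ginv n g)" using ginv_right[OF g] by simp
  also have "\<dots> = (q \<circ> g) \<circ> ginv n g" by (simp add: comp_assoc)
  also have "\<dots> = ginv n g" using q by simp
  finally show ?thesis by simp
qed

lemma ginv_unique': "g \<in> SymX n \<Longrightarrow> g \<circ> q = id \<Longrightarrow> ginv n g = q"
proof -
  assume g: "g \<in> SymX n" and q: "g \<circ> q = id"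
  have "ginv n g = ginv n g \<circ> (g \<circ> q)" using q by simp
  also have "\<dots> = q" using ginv_left[OF g] by (simp add: comp_assoc[symmetric])
  finally show ?thesis .
qed

lemma ginv_comp: "g \<in> SymX n \<Longrightarrow> h \<in> SymX n \<Longrightarrow> ginv n (h \<circ> g) = ginv n g \<circ> ginv n h"
proof (rule ginv_unique)
  assume g: "g \<in> SymX n" and h: "h \<in> SymX n"
  show "h \<circ> g \<in> SymX n" using g h by (rule comp_SymX)
  have "ginv n g \<circ> ginv n h \<circ> (h \<circ> g) = ginv n g \<circ> (ginv n h \<circ> h) \<circ> g" by (simp add: comp_assoc)
  then show "ginv n g \<circ> ginv n h \<circ> (h \<circ> g) = id" using ginv_left[OF g] ginv_left[OF h] by simp
qed

lemma ginv_ginv: "g \<in> SymX n \<Longrightarrow> ginv n (ginv n g) = g"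
  by (rule ginv_unique[OF ginv_SymX ginv_right])

lemma ginv_id: "ginv n id = id"
  by (rule ginv_unique) auto

lemma Hn_I: "g \<in> SymX n \<Longrightarrow> (\<And>i. i \<in> {1..n} \<Longrightarrow> \<exists>z t. \<forall>m. 1 \<le> m \<and> z \<le> m \<longrightarrow> g (i, m) = (i, nat (int m + t)))
   \<Longrightarrow> g \<in> Hn n"
proof -
  assume g: "g \<in> SymX n" and e: "\<And>i. i \<in> {1..n} \<Longrightarrow> \<exists>z t. \<forall>m. 1 \<le> m \<and> z \<le> m \<longrightarrow> g (i, m) = (i, nat (int m + t))"
  have "\<forall>i. \<exists>zt. i \<in> {1..n} \<longrightarrow> (\<forall>m. 1 \<le> m \<and> fst zt \<le> m \<longrightarrow> g (i, m) = (i, nat (int m + snd zt)))"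
    using e by fastforce
  then obtain ZT where "\<forall>i. i \<in> {1..n} \<longrightarrow> (\<forall>m. 1 \<le> m \<and> fst (ZT i) \<le> m \<longrightarrow> g (i, m) = (i, nat (int m + snd (ZT i))))"
    by metis
  then show ?thesis using g unfolding Hn_def by (intro CollectI conjI exI[of _ "\<lambda>i. fst (ZT i)"] exI[of _ "\<lambda>i. snd (ZT i)"]) auto
qed

lemma Hn_E: "g \<in> Hn n \<Longrightarrow> i \<in> {1..n} \<Longrightarrow> \<exists>z t. \<forall>m. 1 \<le> m \<and> z \<le> m \<longrightarrow> g (i, m) = (i, nat (int m + t))"
  unfolding Hn_def by blast

lemma Hn_SymX: "g \<in> Hn n \<Longrightarrow> g \<in> SymX n" unfolding Hn_def by blast

lemma tH_eqI: "(\<forall>m. 1 \<le> m \<and> z \<le> m \<longrightarrow> g (i, m) = (i, nat (int m + t))) \<Longrightarrow> tH g i = t"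
  unfolding tH_def
proof (rule the_equality)
  assume P: "\<forall>m. 1 \<le> m \<and> z \<le> m \<longrightarrow> g (i, m) = (i, nat (int m + t))"
  then show "\<exists>z. \<forall>m. 1 \<le> m \<and> z \<le> m \<longrightarrow> g (i, m) = (i, nat (int m + t))" by blast
  fix t' assume "\<exists>z. \<forall>m. 1 \<le> m \<and> z \<le> m \<longrightarrow> g (i, m) = (i, nat (int m + t'))"
  then obtain z' where P': "\<forall>m. 1 \<le> m \<and> z' \<le> m \<longrightarrow> g (i, m) = (i, nat (int m + t'))" by blast
  define m where "m = z + z' + 1 + nat \<bar>t\<bar> + nat \<bar>t'\<bar>"
  have "g (i, m) = (i, nat (int m + t))" using P by (auto simp: m_def)
  moreover have "g (i, m) = (i, nat (int m + t'))" using P' by (auto simp: m_def)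
  ultimately have "nat (int m + t) = nat (int m + t')" by simp
  then have "int (nat (int m + t)) = int (nat (int m + t'))" by simp
  moreover have "int m + t \<ge> 1" "int m + t' \<ge> 1" by (auto simp: m_def)
  ultimately show "t' = t" by simp
qed

lemma tH_spec: "g \<in> Hn n \<Longrightarrow> i \<in> {1..n} \<Longrightarrow>
   \<exists>z. \<forall>m. z \<le> m \<longrightarrow> g (i, m) = (i, nat (int m + tH g i)) \<and> 1 \<le> int m + tH g i"
proof -
  assume "g \<in> Hn n" "i \<in> {1..n}"
  then obtain z t where P: "\<forall>m. 1 \<le> m \<and> z \<le> m \<longrightarrow> g (i, m) = (i, nat (int m + t))" using Hn_E by blast
  then have t: "tH g i = t" by (rule tH_eqI)
  show ?thesis using P t by (intro exI[of _ "z + 1 + nat \<bar>t\<bar>"]) auto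
qed

lemma Hn_comp: "g \<in> Hn n \<Longrightarrow> h \<in> Hn n \<Longrightarrow> h \<circ> g \<in> Hn n \<and> (\<forall>i\<in>{1..n}. tH (h \<circ> g) i = tH g i + tH h i)"
proof -
  assume g: "g \<in> Hn n" and h: "h \<in> Hn n"
  have *: "\<exists>z. \<forall>m. 1 \<le> m \<and> z \<le> m \<longrightarrow> (h \<circ> g) (i, m) = (i, nat (int m + (tH g i + tH h i)))"
    if i: "i \<in> {1..n}" for i
  proof -
    obtain zg where zg: "\<forall>m. zg \<le> m \<longrightarrow> g (i, m) = (i, nat (int m + tH g i)) \<and> 1 \<le> int m + tH g i"
      using tH_spec[OF g i] by blast
    obtain zh where zh: "\<forall>m. zh \<le> m \<longrightarrow> h (i, m) = (i, nat (int m + tH h i)) \<and> 1 \<le> int m + tH h i"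
      using tH_spec[OF h i] by blast
    show ?thesis
    proof (intro exI[of _ "zg + zh + nat \<bar>tH g i\<bar>"] allI impI)
      fix m assume m: "1 \<le> m \<and> zg + zh + nat \<bar>tH g i\<bar> \<le> m"
      then have g1: "g (i, m) = (i, nat (int m + tH g i))" "1 \<le> int m + tH g i" using zg by auto
      define m1 where "m1 = nat (int m + tH g i)"
      have "zh \<le> m1" using m g1 unfolding m1_def by linarith
      then have "h (i, m1) = (i, nat (int m1 + tH h i))" using zh by auto
      moreover have "int m1 = int m + tH g i" using g1 unfolding m1_def by simp
      ultimately show "(h \<circ> g) (i, m) = (i, nat (int m + (tH g i + tH h i)))"
        using g1 unfolding m1_def by (simp add: add.assoc)
    qed
  qed
  have "h \<circ> g \<in> Hn n"
    by (rule Hn_I[OF comp_SymX[OF Hn_SymX[OF g] Hn_SymX[OF h]]]) (use * in blast)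
  moreover have "tH (h \<circ> g) i = tH g i + tH h i" if "i \<in> {1..n}" for i
    using *[OF that] tH_eqI by blast
  ultimately show ?thesis by blast
qed


lemma Hn_ginv: "g \<in> Hn n \<Longrightarrow> ginv n g \<in> Hn n \<and> (\<forall>i\<in>{1..n}. tH (ginv n g) i = - tH g i)"
proof -
  assume g: "g \<in> Hn n"
  have *: "\<exists>z. \<forall>m. 1 \<le> m \<and> z \<le> m \<longrightarrow> ginv n g (i, m) = (i, nat (int m + - tH g i))"
    if i: "i \<in> {1..n}" for i
  proof -
    obtain zg where zg: "\<forall>m. zg \<le> m \<longrightarrow> g (i, m) = (i, nat (int m + tH g i)) \<and> 1 \<le> int m + tH g i"
      using tH_spec[OF g i] by blast
    show ?thesis
    proof (intro exI[of _ "zg + 1 + nat \<bar>tH g i\<bar>"] allI impI)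
      fix m' assume m': "1 \<le> m' \<and> zg + 1 + nat \<bar>tH g i\<bar> \<le> m'"
      define m where "m = nat (int m' - tH g i)"
      have im: "int m = int m' - tH g i" using m' unfolding m_def by linarith
      have "zg \<le> m" using m' im by linarith
      then have "g (i, m) = (i, nat (int m + tH g i))" using zg by auto
      then have gm: "g (i, m) = (i, m')" using im by simp
      have "ginv n g (g (i, m)) = (i, m)" using ginv_left[OF Hn_SymX[OF g]] by (metis comp_apply id_apply)
      then show "ginv n g (i, m') = (i, nat (int m' + - tH g i))" using gm m_def by simp
    qed
  qed
  have "ginv n g \<in> Hn n"
    by (rule Hn_I[OF ginv_SymX[OF Hn_SymX[OF g]]]) (use * in blast)
  moreover have "tH (ginv n g) i = - tH g i" if "i \<in> {1..n}" for i
    using *[OF that] tH_eqI by blast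
  ultimately show ?thesis by blast
qed

lemma Hn_id: "id \<in> Hn n \<and> (\<forall>i. tH id i = 0)"
proof -
  have "id \<in> Hn n" by (rule Hn_I) (auto intro!: exI[of _ 0])
  moreover have "tH id i = 0" for i by (rule tH_eqI[of 0]) auto
  ultimately show ?thesis by blast
qed

lemma Hn_pow: "g \<in> Hn n \<Longrightarrow> (g ^^ k) \<in> Hn n \<and> (\<forall>i\<in>{1..n}. tH (g ^^ k) i = int k * tH g i)"
proof (induction k)
  case 0 then show ?case using Hn_id[of n] by (simp add: id_def)
next
  case (Suc k)
  then have "g \<circ> (g ^^ k) \<in> Hn n \<and> (\<forall>i\<in>{1..n}. tH (g \<circ> (g ^^ k)) i = tH (g ^^ k) i + tH g i)"
    using Hn_comp[of "g ^^ k" n g] by blast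
  note A = this
  have e: "g ^^ Suc k = g \<circ> (g ^^ k)" by (rule funpow.simps(2))
  show ?case unfolding e
  proof (intro conjI ballI)
    show "g \<circ> g ^^ k \<in> Hn n" using A by blast
    fix i assume i: "i \<in> {1..n}"
    have "tH (g \<circ> g ^^ k) i = tH (g ^^ k) i + tH g i" using A i by blast
    also have "\<dots> = int (Suc k) * tH g i" using Suc i by (simp add: algebra_simps)
    finally show "tH (g \<circ> g ^^ k) i = int (Suc k) * tH g i" .
  qed
qed

lemma Hn_index: "g \<in> Hn n \<Longrightarrow> (\<Sum>i\<in>{1..n}. tH g i) = 0"
proof -
  assume g: "g \<in> Hn n"
  have "\<forall>i. \<exists>z. i \<in> {1..n} \<longrightarrow> (\<forall>m. z \<le> m \<longrightarrow> g (i, m) = (i, nat (int m + tH g i)) \<and> 1 \<le> int m + tH g i)"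
    using tH_spec[OF g] by blast
  then obtain zf where zf: "\<And>i m. i \<in> {1..n} \<Longrightarrow> zf i \<le> m \<Longrightarrow> g (i, m) = (i, nat (int m + tH g i)) \<and> 1 \<le> int m + tH g i"
    by metis
  define K where "K = (\<Sum>i\<in>{1..n}. zf i) + 1"
  have zK: "zf i \<le> K" if "i \<in> {1..n}" for i
  proof -
    have "zf i \<le> (\<Sum>i\<in>{1..n}. zf i)" using that by (intro member_le_sum) auto
    then show ?thesis unfolding K_def by simp
  qed
  define c where "c i = nat (int K + tH g i)" for i
  have c1: "1 \<le> int K + tH g i" if "i \<in> {1..n}" for i using zf[OF that zK[OF that]] by blast
  have K1: "1 \<le> K" unfolding K_def by simp
  define T where "T = Sigma {1..n} (\<lambda>i. {1..<K})"
  define U where "U = Sigma {1..n} (\<lambda>i. {c i..})"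
  have TX: "T \<subseteq> Xn n" unfolding T_def Xn_def by auto
  have XT: "Xn n - T = Sigma {1..n} (\<lambda>i. {K..})" unfolding T_def Xn_def using K1 by auto
  have gXT: "g ` (Xn n - T) = U"
  proof
    show "g ` (Xn n - T) \<subseteq> U"
    proof
      fix q assume "q \<in> g ` (Xn n - T)"
      then obtain i m where i: "i \<in> {1..n}" and m: "K \<le> m" and q: "q = g (i, m)" unfolding XT by auto
      have "g (i, m) = (i, nat (int m + tH g i))" using zf[OF i] zK[OF i] m by auto
      then show "q \<in> U" using q i m unfolding U_def c_def by auto
    qed
    show "U \<subseteq> g ` (Xn n - T)"
    proof
      fix q assume "q \<in> U"
      then obtain i m' where i: "i \<in> {1..n}" and m': "c i \<le> m'" and q: "q = (i, m')" unfolding U_def by auto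
      define m where "m = nat (int m' - tH g i)"
      have im: "int m = int m' - tH g i" using m' c1[OF i] unfolding m_def c_def by linarith
      have Km: "K \<le> m" using im m' c1[OF i] unfolding c_def by linarith
      have "g (i, m) = (i, nat (int m + tH g i))" using zf[OF i] zK[OF i] Km by auto
      then have "g (i, m) = q" using im q by simp
      moreover have "(i, m) \<in> Xn n - T" unfolding XT using i Km by auto
      ultimately show "q \<in> g ` (Xn n - T)" by blast
    qed
  qed
  have bij: "bij_betw g (Xn n) (Xn n)" using Hn_SymX[OF g] SymX_bij by blast
  then have inj: "inj_on g (Xn n)" by (rule bij_betw_imp_inj_on)
  have "g ` T = g ` (Xn n - (Xn n - T))" using TX by (simp add: Diff_Diff_Int Int_absorb1)
  also have "\<dots> = g ` Xn n - g ` (Xn n - T)" using inj by (intro inj_on_image_set_diff) auto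
  also have "\<dots> = Xn n - U" using gXT bij bij_betw_imp_surj_on by metis
  finally have gT: "g ` T = Xn n - U" .
  have XU: "Xn n - U = Sigma {1..n} (\<lambda>i. {1..<c i})" unfolding U_def Xn_def by auto
  have "card T = card (g ` T)" using inj TX by (metis card_image inj_on_subset)
  then have "card T = card (Xn n - U)" using gT by simp
  then have "(\<Sum>i\<in>{1..n}. card {1..<K}) = (\<Sum>i\<in>{1..n}. card {1..<c i})"
    unfolding T_def XU by (simp add: card_SigmaI)
  then have "(\<Sum>i\<in>{1..n}. K - 1) = (\<Sum>i\<in>{1..n}. c i - 1)" by simp
  then have "int (\<Sum>i\<in>{1..n}. K - 1) = int (\<Sum>i\<in>{1..n}. c i - 1)" by simp
  moreover have "int (\<Sum>i\<in>{1..n}. K - 1) = (\<Sum>i\<in>{1..n}. int K - 1)"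
    unfolding of_nat_sum using K1 by (simp add: of_nat_diff)
  moreover have "int (\<Sum>i\<in>{1..n}. c i - 1) = (\<Sum>i\<in>{1..n}. int K - 1 + tH g i)"
    unfolding of_nat_sum
  proof (rule sum.cong[OF refl])
    fix i assume i: "i \<in> {1..n}"
    have "1 \<le> c i" using c1[OF i] unfolding c_def by linarith
    then have "int (c i - 1) = int (c i) - 1" by (simp add: of_nat_diff)
    then show "int (c i - 1) = int K - 1 + tH g i" using c1[OF i] unfolding c_def by simp
  qed
  ultimately have "(\<Sum>i\<in>{1..n}. int K - 1) = (\<Sum>i\<in>{1..n}. int K - 1 + tH g i)" by simp
  then show ?thesis by (simp add: sum.distrib)
qed


lemma sact_in: "(i, m) \<in> Xn n \<Longrightarrow> sact n \<sigma> (i, m) = (\<sigma> i, m)"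
  by (simp add: sact_def)

lemma perm_in1: "\<sigma> permutes {1..n} \<Longrightarrow> Suc 0 \<le> i \<Longrightarrow> i \<le> n \<Longrightarrow> Suc 0 \<le> \<sigma> i"
  using permutes_in_image[of \<sigma> "{1..n}" i] by simp
lemma perm_in2: "\<sigma> permutes {1..n} \<Longrightarrow> Suc 0 \<le> i \<Longrightarrow> i \<le> n \<Longrightarrow> \<sigma> i \<le> n"
  using permutes_in_image[of \<sigma> "{1..n}" i] by simp
lemma perm_in': "\<sigma> permutes {1..n} \<Longrightarrow> i \<in> {1..n} \<Longrightarrow> \<sigma> i \<in> {1..n}"
  using permutes_in_image[of \<sigma> "{1..n}" i] by simp
lemma perm_out: "\<sigma> permutes {1..n} \<Longrightarrow> i \<notin> {1..n} \<Longrightarrow> \<sigma> i = i"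
  using permutes_not_in[of \<sigma> "{1..n}" i] by simp

lemma sact_SymX: "\<sigma> permutes {1..n} \<Longrightarrow> sact n \<sigma> \<in> SymX n"
proof -
  assume s: "\<sigma> permutes {1..n}"
  have si: "inv \<sigma> permutes {1..n}" using s by (rule permutes_inv)
  have "bij_betw (sact n \<sigma>) (Xn n) (Xn n)"
  proof (rule bij_betw_byWitness[where f'="sact n (inv \<sigma>)"])
    show "\<forall>a\<in>Xn n. sact n (inv \<sigma>) (sact n \<sigma> a) = a"
      using s si by (auto simp: sact_def Xn_iff permutes_inverses perm_in1 perm_in2)
    show "\<forall>a\<in>Xn n. sact n \<sigma> (sact n (inv \<sigma>) a) = a"
      using s si by (auto simp: sact_def Xn_iff permutes_inverses perm_in1 perm_in2)
    show "sact n \<sigma> ` Xn n \<subseteq> Xn n"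
      using s by (auto simp: sact_def Xn_iff perm_in1 perm_in2)
    show "sact n (inv \<sigma>) ` Xn n \<subseteq> Xn n"
      using si by (auto simp: sact_def Xn_iff perm_in1 perm_in2)
  qed
  then show ?thesis by (simp add: SymX_def sact_def)
qed

definition Gp :: "nat \<Rightarrow> perm set" where
  "Gp n = {g \<in> SymX n. \<exists>\<sigma>. \<sigma> permutes {1..n} \<and>
     (\<forall>i\<in>{1..n}. \<exists>z t. \<forall>m. 1 \<le> m \<and> z \<le> m \<longrightarrow> g (i, m) = (\<sigma> i, nat (int m + t)))}"

lemma Gn_Gp: "g \<in> Gn n \<Longrightarrow> g \<in> Gp n"
proof -
  assume "g \<in> Gn n"
  then obtain \<omega> \<sigma> where g: "g = sact n \<sigma> \<circ> \<omega>" and w: "\<omega> \<in> Hn n" and s: "\<sigma> permutes {1..n}"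
    unfolding Gn_def gmul_def by blast
  have "g \<in> SymX n" using g comp_SymX[OF Hn_SymX[OF w] sact_SymX[OF s]] by simp
  moreover have "\<exists>z t. \<forall>m. 1 \<le> m \<and> z \<le> m \<longrightarrow> g (i, m) = (\<sigma> i, nat (int m + t))" if i: "i \<in> {1..n}" for i
  proof -
    obtain z where z: "\<forall>m. z \<le> m \<longrightarrow> \<omega> (i, m) = (i, nat (int m + tH \<omega> i)) \<and> 1 \<le> int m + tH \<omega> i"
      using tH_spec[OF w i] by blast
    show ?thesis
    proof (intro exI allI impI)
      fix m assume m: "1 \<le> m \<and> z \<le> m"
      then have "\<omega> (i, m) = (i, nat (int m + tH \<omega> i))" "1 \<le> int m + tH \<omega> i" using z by auto
      then show "g (i, m) = (\<sigma> i, nat (int m + tH \<omega> i))" using i g by (simp add: sact_in Xn_iff)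
    qed
  qed
  ultimately show ?thesis using s unfolding Gp_def by blast
qed

lemma Gp_Gn: "g \<in> Gp n \<Longrightarrow> g \<in> Gn n"
proof -
  assume "g \<in> Gp n"
  then obtain \<sigma> where gS: "g \<in> SymX n" and s: "\<sigma> permutes {1..n}"
    and e: "\<forall>i\<in>{1..n}. \<exists>z t. \<forall>m. 1 \<le> m \<and> z \<le> m \<longrightarrow> g (i, m) = (\<sigma> i, nat (int m + t))"
    unfolding Gp_def by blast
  have si: "inv \<sigma> permutes {1..n}" using s by (rule permutes_inv)
  define \<omega> where "\<omega> = sact n (inv \<sigma>) \<circ> g"
  have wS: "\<omega> \<in> SymX n" unfolding \<omega>_def by (rule comp_SymX[OF gS sact_SymX[OF si]])
  have "\<omega> \<in> Hn n"
  proof (rule Hn_I[OF wS])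
    fix i assume i: "i \<in> {1..n}"
    then obtain z t where zt: "\<forall>m. 1 \<le> m \<and> z \<le> m \<longrightarrow> g (i, m) = (\<sigma> i, nat (int m + t))" using e by blast
    show "\<exists>z t. \<forall>m. 1 \<le> m \<and> z \<le> m \<longrightarrow> \<omega> (i, m) = (i, nat (int m + t))"
    proof (intro exI allI impI)
      fix m assume m: "1 \<le> m \<and> z \<le> m"
      have "(i, m) \<in> Xn n" using i m by (simp add: Xn_iff)
      then have "g (i, m) \<in> Xn n" using SymX_in[OF gS] by blast
      moreover have "g (i, m) = (\<sigma> i, nat (int m + t))" using zt m by blast
      ultimately show "\<omega> (i, m) = (i, nat (int m + t))"
        unfolding \<omega>_def using s by (simp add: sact_in permutes_inverses)
    qed
  qed
  moreover have "g = gmul \<omega> (sact n \<sigma>)"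
  proof -
    have "sact n \<sigma> \<circ> sact n (inv \<sigma>) = id"
    proof
      fix p show "(sact n \<sigma> \<circ> sact n (inv \<sigma>)) p = id p"
        using s si by (cases p) (auto simp: sact_def Xn_iff permutes_inverses perm_in1 perm_in2)
    qed
    then show ?thesis unfolding gmul_def \<omega>_def by (simp add: comp_assoc[symmetric])
  qed
  ultimately show ?thesis using s unfolding Gn_def by blast
qed

lemma Gp_comp: "g \<in> Gp n \<Longrightarrow> h \<in> Gp n \<Longrightarrow> h \<circ> g \<in> Gp n"
proof -
  assume "g \<in> Gp n" "h \<in> Gp n"
  then obtain \<sigma> \<tau> where gS: "g \<in> SymX n" and s: "\<sigma> permutes {1..n}"
    and eg: "\<forall>i\<in>{1..n}. \<exists>z t. \<forall>m. 1 \<le> m \<and> z \<le> m \<longrightarrow> g (i, m) = (\<sigma> i, nat (int m + t))"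
    and hS: "h \<in> SymX n" and ta: "\<tau> permutes {1..n}"
    and eh: "\<forall>i\<in>{1..n}. \<exists>z t. \<forall>m. 1 \<le> m \<and> z \<le> m \<longrightarrow> h (i, m) = (\<tau> i, nat (int m + t))"
    unfolding Gp_def by blast
  have "\<exists>z t. \<forall>m. 1 \<le> m \<and> z \<le> m \<longrightarrow> (h \<circ> g) (i, m) = ((\<tau> \<circ> \<sigma>) i, nat (int m + t))" if i: "i \<in> {1..n}" for i
  proof -
    obtain z1 t1 where 1: "\<forall>m. 1 \<le> m \<and> z1 \<le> m \<longrightarrow> g (i, m) = (\<sigma> i, nat (int m + t1))" using eg i by blast
    have si: "\<sigma> i \<in> {1..n}" using s i by (rule perm_in')
    obtain z2 t2 where 2: "\<forall>m. 1 \<le> m \<and> z2 \<le> m \<longrightarrow> h (\<sigma> i, m) = (\<tau> (\<sigma> i), nat (int m + t2))" using eh si by blast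
    show ?thesis
    proof (intro exI[of _ "z1 + z2 + nat \<bar>t1\<bar> + 1"] exI[of _ "t1 + t2"] allI impI)
      fix m assume m: "1 \<le> m \<and> z1 + z2 + nat \<bar>t1\<bar> + 1 \<le> m"
      define m1 where "m1 = nat (int m + t1)"
      have im1: "int m1 = int m + t1" using m unfolding m1_def by linarith
      have "1 \<le> m1 \<and> z2 \<le> m1" using m im1 by linarith
      then have "h (\<sigma> i, m1) = (\<tau> (\<sigma> i), nat (int m1 + t2))" using 2 by blast
      moreover have "g (i, m) = (\<sigma> i, m1)" using 1 m unfolding m1_def by auto
      ultimately show "(h \<circ> g) (i, m) = ((\<tau> \<circ> \<sigma>) i, nat (int m + (t1 + t2)))" using im1 by (simp add: add.assoc)
    qed
  qed
  then show ?thesis unfolding Gp_def using comp_SymX[OF gS hS] permutes_compose[OF s ta] by blast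
qed

lemma Gp_ginv: "g \<in> Gp n \<Longrightarrow> ginv n g \<in> Gp n"
proof -
  assume "g \<in> Gp n"
  then obtain \<sigma> where gS: "g \<in> SymX n" and s: "\<sigma> permutes {1..n}"
    and e: "\<forall>i\<in>{1..n}. \<exists>z t. \<forall>m. 1 \<le> m \<and> z \<le> m \<longrightarrow> g (i, m) = (\<sigma> i, nat (int m + t))"
    unfolding Gp_def by blast
  have si: "inv \<sigma> permutes {1..n}" using s by (rule permutes_inv)
  have "\<exists>z t. \<forall>m. 1 \<le> m \<and> z \<le> m \<longrightarrow> ginv n g (j, m) = (inv \<sigma> j, nat (int m + t))" if j: "j \<in> {1..n}" for j
  proof -
    define i where "i = inv \<sigma> j"
    have i: "i \<in> {1..n}" using si j unfolding i_def by (rule perm_in')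
    have sij: "\<sigma> i = j" unfolding i_def using s by (simp add: permutes_inverses)
    obtain z t where zt: "\<forall>m. 1 \<le> m \<and> z \<le> m \<longrightarrow> g (i, m) = (\<sigma> i, nat (int m + t))" using e i by blast
    show ?thesis
    proof (intro exI[of _ "z + nat \<bar>t\<bar> + 1"] exI[of _ "- t"] allI impI)
      fix m' assume m': "1 \<le> m' \<and> z + nat \<bar>t\<bar> + 1 \<le> m'"
      define m where "m = nat (int m' - t)"
      have im: "int m = int m' - t" using m' unfolding m_def by linarith
      have "1 \<le> m \<and> z \<le> m" using m' im by linarith
      then have "g (i, m) = (j, m')" using zt sij im by simp
      moreover have "ginv n g (g (i, m)) = (i, m)" using ginv_left[OF gS] by (metis comp_apply id_apply)
      ultimately show "ginv n g (j, m') = (inv \<sigma> j, nat (int m' + - t))" using im i_def by simp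
    qed
  qed
  then show ?thesis unfolding Gp_def using ginv_SymX[OF gS] si by blast
qed

lemma Gp_id: "id \<in> Gp n"
  unfolding Gp_def by (auto intro!: exI[of _ id] exI[of _ 0] permutes_id)

lemma Hn_Gn: "g \<in> Hn n \<Longrightarrow> g \<in> Gn n"
proof -
  assume g: "g \<in> Hn n"
  have "sact n id = id" by (auto simp: sact_def)
  then have "g = gmul g (sact n id)" by (simp add: gmul_def)
  then show ?thesis unfolding Gn_def using g permutes_id by blast
qed

lemma sigma_of_permutes: "g \<in> Gn n \<Longrightarrow> sigma_of n g permutes {1..n}"
proof -
  assume g: "g \<in> Gn n"
  let ?P = "\<lambda>\<sigma>. \<sigma> permutes {1..n} \<and> (\<exists>\<omega> \<in> Hn n. g = gmul \<omega> (sact n \<sigma>))"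
  have ex: "\<exists>\<sigma>. ?P \<sigma>" using g unfolding Gn_def by blast
  have un: "\<sigma>1 = \<sigma>2" if 1: "?P \<sigma>1" and 2: "?P \<sigma>2" for \<sigma>1 \<sigma>2
  proof
    fix i
    obtain \<omega>1 where w1: "\<omega>1 \<in> Hn n" "g = sact n \<sigma>1 \<circ> \<omega>1" using 1 by (auto simp: gmul_def)
    obtain \<omega>2 where w2: "\<omega>2 \<in> Hn n" "g = sact n \<sigma>2 \<circ> \<omega>2" using 2 by (auto simp: gmul_def)
    show "\<sigma>1 i = \<sigma>2 i"
    proof (cases "i \<in> {1..n}")
      case False then show ?thesis using 1 2 perm_out by metis
    next
      case True
      obtain z1 where z1: "\<forall>m. z1 \<le> m \<longrightarrow> \<omega>1 (i, m) = (i, nat (int m + tH \<omega>1 i)) \<and> 1 \<le> int m + tH \<omega>1 i"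
        using tH_spec[OF w1(1) True] by blast
      obtain z2 where z2: "\<forall>m. z2 \<le> m \<longrightarrow> \<omega>2 (i, m) = (i, nat (int m + tH \<omega>2 i)) \<and> 1 \<le> int m + tH \<omega>2 i"
        using tH_spec[OF w2(1) True] by blast
      define m where "m = z1 + z2"
      have a: "\<omega>1 (i, m) = (i, nat (int m + tH \<omega>1 i))" "1 \<le> int m + tH \<omega>1 i" using z1 m_def by auto
      have b: "\<omega>2 (i, m) = (i, nat (int m + tH \<omega>2 i))" "1 \<le> int m + tH \<omega>2 i" using z2 m_def by auto
      have "g (i, m) = (\<sigma>1 i, nat (int m + tH \<omega>1 i))" using w1(2) a True by (simp add: sact_in Xn_iff)
      moreover have "g (i, m) = (\<sigma>2 i, nat (int m + tH \<omega>2 i))" using w2(2) b True by (simp add: sact_in Xn_iff)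
      ultimately show ?thesis by simp
    qed
  qed
  have "\<exists>!\<sigma>. ?P \<sigma>" using ex un by blast
  then have "?P (sigma_of n g)" unfolding sigma_of_def by (rule theI')
  then show ?thesis by blast
qed

lemma perm_order_pos: "\<sigma> permutes {1..n} \<Longrightarrow> 0 < perm_order \<sigma>"
proof -
  assume s: "\<sigma> permutes {1..n}"
  have "permutation \<sigma>" using s by (rule permutes_imp_permutation[OF finite_atLeastAtMost])
  then have "\<forall>x. \<exists>k>0. (\<sigma> ^^ k) x = x" by (metis permutation_self)
  then obtain kf where kf: "\<And>x. 0 < kf x" "\<And>x. (\<sigma> ^^ kf x) x = x" by metis
  define N where "N = (\<Prod>x\<in>{1..n}. kf x)"
  have N0: "0 < N" unfolding N_def using kf(1) by (simp add: prod_pos)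
  have "(\<sigma> ^^ N) x = x" for x
  proof (cases "x \<in> {1..n}")
    case True
    then have "kf x dvd N" unfolding N_def by (intro dvd_prodI) auto
    then obtain c where c: "N = kf x * c" by (auto simp: dvd_def)
    have "((\<sigma> ^^ kf x) ^^ c) x = x" by (induction c) (auto simp: kf(2))
    then show ?thesis unfolding c by (simp add: funpow_mult)
  next
    case False
    have "(\<sigma> ^^ k) x = x" for k by (induction k) (use perm_out[OF s False] in auto)
    then show ?thesis .
  qed
  then have "0 < N \<and> \<sigma> ^^ N = id" using N0 by auto
  then show ?thesis unfolding perm_order_def by (metis (mono_tags, lifting) LeastI)
qed


lemma foldl_comp_gen:
  "foldl (\<lambda>acc (k, b). gmul acc (L k b)) x v = foldl (\<lambda>acc (k, b). gmul acc (L k b)) id v \<circ> x"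
proof (induction v arbitrary: x)
  case Nil then show ?case by simp
next
  case (Cons a v)
  obtain k b where a: "a = (k, b)" by fastforce
  have "foldl (\<lambda>acc (k, b). gmul acc (L k b)) x (a # v) = foldl (\<lambda>acc (k, b). gmul acc (L k b)) (L k b \<circ> x) v"
    by (simp add: a gmul_def)
  also have "\<dots> = foldl (\<lambda>acc (k, b). gmul acc (L k b)) id v \<circ> (L k b \<circ> x)" by (rule Cons.IH)
  also have "\<dots> = (foldl (\<lambda>acc (k, b). gmul acc (L k b)) id v \<circ> L k b) \<circ> x" by (simp add: comp_assoc)
  also have "foldl (\<lambda>acc (k, b). gmul acc (L k b)) id v \<circ> L k b = foldl (\<lambda>acc (k, b). gmul acc (L k b)) (L k b) v"
    by (rule Cons.IH[symmetric])
  also have "\<dots> = foldl (\<lambda>acc (k, b). gmul acc (L k b)) id (a # v)" by (simp add: a gmul_def)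
  finally show ?case .
qed

lemma we_append: "word_eval n gens (u @ v) = word_eval n gens v \<circ> word_eval n gens u"
  unfolding word_eval_def foldl_append by (rule foldl_comp_gen)

lemma we_Nil[simp]: "word_eval n gens [] = id" by (simp add: word_eval_def)

lemma we_single: "word_eval n gens [(k, b)] = (if b then ginv n (gens ! k) else gens ! k)"
  by (simp add: word_eval_def gmul_def)

lemma valid_append[simp]: "valid_word gens (u @ v) \<longleftrightarrow> valid_word gens u \<and> valid_word gens v"
  unfolding valid_word_def by auto

lemma we_rep: "word_eval n gens (concat (replicate k v)) = (word_eval n gens v) ^^ k"
proof (induction k)
  case 0 then show ?case by (simp add: id_def)
next
  case (Suc k)
  have "word_eval n gens (concat (replicate (Suc k) v)) = word_eval n gens (concat (replicate k v)) \<circ> word_eval n gens v"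
    by (simp add: we_append)
  also have "\<dots> = (word_eval n gens v) ^^ Suc k" by (simp only: Suc funpow_Suc_right)
  finally show ?case .
qed

lemma valid_rep: "valid_word gens v \<Longrightarrow> valid_word gens (concat (replicate k v))"
  by (induction k) (auto simp: valid_word_def)

lemma we_Gp: "set gens \<subseteq> Gn n \<Longrightarrow> valid_word gens w \<Longrightarrow> word_eval n gens w \<in> Gp n"
proof (induction w rule: rev_induct)
  case Nil then show ?case by (simp only: we_Nil) (rule Gp_id)
next
  case (snoc x w)
  obtain k b where x: "x = (k, b)" by fastforce
  have v: "valid_word gens w" "k < length gens" using snoc.prems x by (auto simp: valid_word_def)
  have "gens ! k \<in> Gp n" using snoc.prems(1) v(2) Gn_Gp by (meson nth_mem subsetD)
  then have L: "word_eval n gens [x] \<in> Gp n" using x by (simp add: we_single Gp_ginv)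
  show ?case unfolding we_append by (rule Gp_comp[OF snoc.IH[OF snoc.prems(1) v(1)] L])
qed

lemma we_Gn: "generating_list n gens \<Longrightarrow> valid_word gens w \<Longrightarrow> word_eval n gens w \<in> Gn n"
  using we_Gp Gp_Gn unfolding generating_list_def by blast

definition yel :: "nat \<Rightarrow> perm" where
  "yel j = (\<lambda>(i, m). if i = 1 \<and> 1 \<le> m then (1, m + 1)
                    else if i = j \<and> m = 1 then (1, 1)
                    else if i = j \<and> 2 \<le> m then (j, m - 1) else (i, m))"

definition yinv :: "nat \<Rightarrow> perm" where
  "yinv j = (\<lambda>(i, m). if i = 1 \<and> m = 1 then (j, 1)
                    else if i = 1 \<and> 2 \<le> m then (1, m - 1)
                    else if i = j \<and> 1 \<le> m then (j, m + 1) else (i, m))"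

lemma yel_yinv: "2 \<le> j \<Longrightarrow> yel j \<circ> yinv j = id"
  by (rule ext) (auto simp: yel_def yinv_def)
lemma yinv_yel: "2 \<le> j \<Longrightarrow> yinv j \<circ> yel j = id"
  by (rule ext) (auto simp: yel_def yinv_def)

lemma yel_SymX: "2 \<le> j \<Longrightarrow> j \<le> n \<Longrightarrow> yel j \<in> SymX n"
proof -
  assume j: "2 \<le> j" "j \<le> n"
  have "bij_betw (yel j) (Xn n) (Xn n)"
  proof (rule bij_betw_byWitness[where f'="yinv j"])
    show "\<forall>a\<in>Xn n. yinv j (yel j a) = a" using yinv_yel[OF j(1)] by (metis comp_apply id_apply)
    show "\<forall>a\<in>Xn n. yel j (yinv j a) = a" using yel_yinv[OF j(1)] by (metis comp_apply id_apply)
    show "yel j ` Xn n \<subseteq> Xn n" using j by (auto simp: yel_def Xn_def split: if_splits)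
    show "yinv j ` Xn n \<subseteq> Xn n" using j by (auto simp: yinv_def Xn_def split: if_splits)
  qed
  moreover have "\<forall>p. p \<notin> Xn n \<longrightarrow> yel j p = p" using j by (auto simp: yel_def Xn_def)
  ultimately show ?thesis by (simp add: SymX_def)
qed

lemma yel_Hn: "2 \<le> j \<Longrightarrow> j \<le> n \<Longrightarrow> yel j \<in> Hn n \<and>
   (\<forall>i\<in>{1..n}. tH (yel j) i = (if i = 1 then 1 else if i = j then -1 else 0))"
proof -
  assume j: "2 \<le> j" "j \<le> n"
  have *: "\<forall>m. 1 \<le> m \<and> 2 \<le> m \<longrightarrow> yel j (i, m) = (i, nat (int m + (if i = 1 then 1 else if i = j then -1 else 0)))" for i
    using j by (auto simp: yel_def nat_add_distrib)
  have "yel j \<in> Hn n" by (rule Hn_I[OF yel_SymX[OF j]]) (use * in blast)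
  moreover have "tH (yel j) i = (if i = 1 then 1 else if i = j then -1 else 0)" for i
    by (rule tH_eqI[OF *])
  ultimately show ?thesis by blast
qed


lemma rf_divS: "rf k f \<Longrightarrow> rf k g \<Longrightarrow> rf k (\<lambda>xs. f xs div Suc (g xs))"
proof -
  have A: "rf (Suc (Suc (Suc 0))) (\<lambda>ys. if Suc (ys!0) * Suc (ys!2) \<le> ys!1 then 1 else 0)"
    by (rule rf_le[OF rf_mult[OF rf_succ[OF rf_p0] rf_succ[OF rf_p2]] rf_p1 rf_const rf_const])
  have B: "rf (Suc (Suc 0)) (\<lambda>xs. LEAST q. (\<lambda>ys. if Suc (ys!0) * Suc (ys!2) \<le> ys!1 then 1 else 0) (q # xs) = (0::nat))"
  proof (rule rf_mn[OF A])
    fix xs :: "nat list" assume "length xs = Suc (Suc 0)"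
    have "\<not> Suc (xs!0) * Suc (xs!1) \<le> xs!0" by simp
    then show "\<exists>q. (\<lambda>ys. if Suc (ys!0) * Suc (ys!2) \<le> ys!1 then 1 else 0) (q # xs) = (0::nat)"
      by (intro exI[of _ "xs!0"]) simp
  qed
  have C: "(LEAST q. \<not> Suc q * Suc b \<le> a) = a div Suc b" for a b :: nat
  proof (rule Least_equality)
    show "\<not> Suc (a div Suc b) * Suc b \<le> a"
      by (metis Suc_eq_plus1 div_mult_mod_eq le_add1 add_le_cancel_left mod_less_divisor zero_less_Suc not_le
          distrib_right mult_1 add.commute)
    fix y assume "\<not> Suc y * Suc b \<le> a"
    then have "a < Suc y * Suc b" by simp
    then have "a div Suc b < Suc y" by (simp add: div_less_iff_less_mult)
    then show "a div Suc b \<le> y" by simp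
  qed
  have "rf (Suc (Suc 0)) (\<lambda>xs. xs!0 div Suc (xs!1))"
  proof (rule rf_cong[OF B])
    fix xs :: "nat list"
    show "(LEAST q. (\<lambda>ys. if Suc (ys!0) * Suc (ys!2) \<le> ys!1 then 1 else 0) (q # xs) = (0::nat)) = xs!0 div Suc (xs!1)"
      using C[of "xs!1" "xs!0"] by (simp del: mult_Suc mult_Suc_right)
  qed
  then show "rf k f \<Longrightarrow> rf k g \<Longrightarrow> ?thesis" using rf_comp2[of "\<lambda>xs. xs!0 div Suc (xs!1)" k f g] by simp
qed

lemma rf_modS: "rf k f \<Longrightarrow> rf k g \<Longrightarrow> rf k (\<lambda>xs. f xs mod Suc (g xs))"
proof -
  assume f: "rf k f" and g: "rf k g"
  have "rf k (\<lambda>xs. f xs - Suc (g xs) * (f xs div Suc (g xs)))"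
    by (rule rf_sub[OF f rf_mult[OF rf_succ[OF g] rf_divS[OF f g]]])
  moreover have "f xs - Suc (g xs) * (f xs div Suc (g xs)) = f xs mod Suc (g xs)" for xs
    by (metis minus_mult_div_eq_mod)
  ultimately show ?thesis by simp
qed

definition cdl :: "letter \<Rightarrow> nat" where "cdl l = 2 * fst l + (if snd l then 1 else 0)"
definition dec :: "nat \<Rightarrow> letter list" where "dec q = map (\<lambda>x. (x div 2, odd x)) (list_decode q)"

lemma enc_word_cdl: "enc_word w = list_encode (map cdl w)"
  unfolding enc_word_def cdl_def by (metis (no_types, lifting) case_prod_beta map_eq_conv)

lemma enc_dec[simp]: "enc_word (dec q) = q"
proof -
  have "map cdl (dec q) = list_decode q" unfolding dec_def cdl_def
    by (rule nth_equalityI) auto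
  then show ?thesis by (simp add: enc_word_cdl)
qed

lemma dec_enc[simp]: "dec (enc_word w) = w"
proof -
  have "map (\<lambda>x. (x div 2, odd x)) (map cdl w) = w"
    by (rule nth_equalityI) (auto simp: cdl_def prod_eq_iff)
  then show ?thesis by (simp add: dec_def enc_word_cdl)
qed

lemma enc_append: "enc_word (u @ v) = appc (enc_word u) (enc_word v)"
  by (simp add: enc_word_cdl)

lemma rf_rep: "rf k f \<Longrightarrow> rf k (\<lambda>xs. enc_word (concat (replicate (f xs) v)))"
proof -
  have A: "rf (Suc 0) (\<lambda>xs. ((\<lambda>a. (\<lambda>ys. appc (enc_word v) (ys!0)) (a # tl xs)) ^^ (hd xs)) ((\<lambda>_. 0) (tl xs)))"
    by (rule rf_funpow[OF rf_appc[OF rf_const rf_p0] rf_const])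
  have B: "((\<lambda>a. appc (enc_word v) a) ^^ k) 0 = enc_word (concat (replicate k v))" for k
    by (induction k) (auto simp: enc_append enc_word_cdl)
  have "rf (Suc 0) (\<lambda>xs. enc_word (concat (replicate (xs!0) v)))"
    by (rule rf_cong[OF A]) (auto simp: B length_Suc_conv)
  then show "rf k f \<Longrightarrow> ?thesis" using rf_comp1[of "\<lambda>xs. enc_word (concat (replicate (xs!0) v))" k f] by simp
qed


fun Wl :: "(nat \<Rightarrow> letter list) \<Rightarrow> nat list \<Rightarrow> nat \<Rightarrow> nat \<Rightarrow> letter list" where
  "Wl vw [] c M = []"
| "Wl vw (j # js) c M = concat (replicate (c mod M) (vw j)) @ Wl vw js (c div M) M"

fun Wil :: "(nat \<Rightarrow> letter list) \<Rightarrow> nat list \<Rightarrow> nat \<Rightarrow> nat \<Rightarrow> letter list" where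
  "Wil viw [] c M = []"
| "Wil viw (j # js) c M = Wil viw js (c div M) M @ concat (replicate (c mod M) (viw j))"

lemma rf_Wl: "rf (Suc (Suc 0)) (\<lambda>xs. enc_word (Wl vw js (xs!0) (Suc (xs!1))))"
proof (induction js)
  case Nil then show ?case by (simp add: enc_word_def rf_const)
next
  case (Cons j js)
  have "rf (Suc (Suc 0)) (\<lambda>xs. appc (enc_word (concat (replicate (xs!0 mod Suc (xs!1)) (vw j))))
          ((\<lambda>xs. enc_word (Wl vw js (xs!0) (Suc (xs!1)))) [xs!0 div Suc (xs!1), xs!1]))"
    by (rule rf_appc[OF rf_rep[OF rf_modS[OF rf_p0 rf_p1]] rf_comp2[OF Cons rf_divS[OF rf_p0 rf_p1] rf_p1]])
  then show ?case by (simp add: enc_append)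
qed

lemma rf_Wil: "rf (Suc (Suc 0)) (\<lambda>xs. enc_word (Wil viw js (xs!0) (Suc (xs!1))))"
proof (induction js)
  case Nil then show ?case by (simp add: enc_word_def rf_const)
next
  case (Cons j js)
  have "rf (Suc (Suc 0)) (\<lambda>xs. appc ((\<lambda>xs. enc_word (Wil viw js (xs!0) (Suc (xs!1)))) [xs!0 div Suc (xs!1), xs!1])
          (enc_word (concat (replicate (xs!0 mod Suc (xs!1)) (viw j)))))"
    by (rule rf_appc[OF rf_comp2[OF Cons rf_divS[OF rf_p0 rf_p1] rf_p1] rf_rep[OF rf_modS[OF rf_p0 rf_p1]]])
  then show ?case by (simp add: enc_append)
qed

lemma valid_Nil[simp]: "valid_word gens []" by (simp add: valid_word_def)

lemma valid_Wl: "(\<forall>j\<in>set js. valid_word gens (vw j)) \<Longrightarrow> valid_word gens (Wl vw js c M)"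
  by (induction js arbitrary: c) (auto intro: valid_rep)
lemma valid_Wil: "(\<forall>j\<in>set js. valid_word gens (viw j)) \<Longrightarrow> valid_word gens (Wil viw js c M)"
  by (induction js arbitrary: c) (auto intro: valid_rep)

lemma we_Wl: "word_eval n gens (Wl vw (j # js) c M) = word_eval n gens (Wl vw js (c div M) M) \<circ> (word_eval n gens (vw j) ^^ (c mod M))"
  by (simp only: Wl.simps we_append we_rep)
lemma we_Wil: "word_eval n gens (Wil viw (j # js) c M) = (word_eval n gens (viw j) ^^ (c mod M)) \<circ> word_eval n gens (Wil viw js (c div M) M)"
  by (simp only: Wil.simps we_append we_rep)

lemma Wl_Hn: "(\<forall>j\<in>set js. 2 \<le> j \<and> j \<le> n \<and> word_eval n gens (vw j) = yel j) \<Longrightarrow> word_eval n gens (Wl vw js c M) \<in> Hn n"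
proof (induction js arbitrary: c)
  case Nil then show ?case by (simp only: Wl.simps we_Nil) (rule Hn_id[THEN conjunct1])
next
  case (Cons j js)
  then have y: "yel j \<in> Hn n" using yel_Hn by auto
  show ?case unfolding we_Wl
    using Cons y by (intro Hn_comp[THEN conjunct1]) (auto intro: Hn_pow[THEN conjunct1])
qed

lemma funpow_inv: "(f::'a \<Rightarrow> 'a) \<circ> g = id \<Longrightarrow> (f ^^ a) \<circ> (g ^^ a) = id"
proof (induction a)
  case 0 show ?case by simp
next
  case (Suc a)
  have "(f ^^ Suc a) \<circ> (g ^^ Suc a) = (f ^^ a) \<circ> (f \<circ> g) \<circ> (g ^^ a)"
  proof -
    have e1: "f ^^ Suc a = (f ^^ a) \<circ> f" by (rule funpow_Suc_right)
    have e2: "g ^^ Suc a = g \<circ> (g ^^ a)" by simp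
    show ?thesis unfolding e1 e2 by (simp only: comp_assoc)
  qed
  also have "\<dots> = (f ^^ a) \<circ> (g ^^ a)" by (simp only: Suc.prems comp_id)
  also have "\<dots> = id" by (rule Suc.IH[OF Suc.prems])
  finally show ?case .
qed

lemma Wil_Wl: "(\<forall>j\<in>set js. word_eval n gens (viw j) \<circ> word_eval n gens (vw j) = id) \<Longrightarrow>
  word_eval n gens (Wil viw js c M) \<circ> word_eval n gens (Wl vw js c M) = id"
proof (induction js arbitrary: c)
  case Nil then show ?case by simp
next
  case (Cons j js)
  let ?a = "c mod M"
  have "word_eval n gens (Wil viw (j # js) c M) \<circ> word_eval n gens (Wl vw (j # js) c M) =
     (word_eval n gens (viw j) ^^ ?a) \<circ> (word_eval n gens (Wil viw js (c div M) M) \<circ> word_eval n gens (Wl vw js (c div M) M))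
     \<circ> (word_eval n gens (vw j) ^^ ?a)"
    by (simp only: we_Wl we_Wil comp_assoc)
  also have "\<dots> = (word_eval n gens (viw j) ^^ ?a) \<circ> (word_eval n gens (vw j) ^^ ?a)"
  proof -
    have ih: "word_eval n gens (Wil viw js (c div M) M) \<circ> word_eval n gens (Wl vw js (c div M) M) = id"
      using Cons.prems by (intro Cons.IH) simp
    show ?thesis by (simp only: ih comp_id)
  qed
  also have "\<dots> = id" by (rule funpow_inv[OF bspec[OF Cons.prems, of j]]) simp
  finally show ?case .
qed

primrec ed :: "nat list \<Rightarrow> nat \<Rightarrow> nat" where
  "ed [] M = 0"
| "ed (a # as) M = a + M * ed as M"

lemma ed_less: "\<forall>a\<in>set as. a < M \<Longrightarrow> ed as M < M ^ length as"
proof (induction as)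
  case Nil then show ?case by simp
next
  case (Cons a as)
  then have "ed as M + 1 \<le> M ^ length as" "a + 1 \<le> M" by auto
  then have "a + M * ed as M + 1 \<le> M + M * ed as M" by simp
  also have "\<dots> = M * (ed as M + 1)" by (simp add: algebra_simps)
  also have "\<dots> \<le> M * M ^ length as" using \<open>ed as M + 1 \<le> M ^ length as\<close> by (rule mult_le_mono2)
  finally show ?case by simp
qed

lemma ed_mod: "a < M \<Longrightarrow> ed (a # as) M mod M = a" by simp
lemma ed_div: "a < M \<Longrightarrow> ed (a # as) M div M = ed as M" by simp

lemma Wl_tH: "(\<forall>j\<in>set js. 2 \<le> j \<and> j \<le> n \<and> word_eval n gens (vw j) = yel j) \<Longrightarrow>
  length as = length js \<Longrightarrow> (\<forall>a\<in>set as. a < M) \<Longrightarrow> i \<in> {1..n} \<Longrightarrow>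
  tH (word_eval n gens (Wl vw js (ed as M) M)) i = (\<Sum>(a, j)\<leftarrow>zip as js. int a * tH (yel j) i)"
proof (induction js arbitrary: as)
  case Nil
  have "tH (word_eval n gens (Wl vw [] (ed as M) M)) i = tH id i" by (simp only: Wl.simps we_Nil)
  also have "\<dots> = 0" by (rule Hn_id[THEN conjunct2, rule_format])
  finally have "tH (word_eval n gens (Wl vw [] (ed as M) M)) i = 0" .
  moreover have "(\<Sum>(a, j)\<leftarrow>zip as []. int a * tH (yel j) i) = 0" by simp
  ultimately show ?case by (metis (no_types))
next
  case (Cons j js)
  then obtain a as' where as: "as = a # as'" by (cases as) auto
  have y: "yel j \<in> Hn n" using Cons.prems yel_Hn by auto
  have a: "a < M" using Cons.prems as by auto
  have W: "word_eval n gens (Wl vw js (ed as' M) M) \<in> Hn n" using Cons.prems by (intro Wl_Hn) auto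
  have "tH (word_eval n gens (Wl vw (j # js) (ed as M) M)) i
      = tH (word_eval n gens (Wl vw js (ed as' M) M) \<circ> (yel j ^^ a)) i"
    using Cons.prems as a by (simp only: we_Wl ed_mod ed_div) simp
  also have "\<dots> = tH (yel j ^^ a) i + tH (word_eval n gens (Wl vw js (ed as' M) M)) i"
    using Hn_comp[OF Hn_pow[OF y, THEN conjunct1] W] Cons.prems by blast
  also have "\<dots> = int a * tH (yel j) i + (\<Sum>(a, j)\<leftarrow>zip as' js. int a * tH (yel j) i)"
    using Hn_pow[OF y] Cons as by simp
  finally show ?case using as by simp
qed


lemma conj_eq: "gmul (gmul (ginv n x) g) x = x \<circ> g \<circ> ginv n x"
  by (simp add: gmul_def comp_assoc)

definition zp :: "nat \<Rightarrow> perm \<Rightarrow> int \<Rightarrow> perm" where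
  "zp n e k = (if 0 \<le> k then e ^^ nat k else (ginv n e) ^^ nat (- k))"

lemma zp_Hn: "e \<in> Hn n \<Longrightarrow> zp n e k \<in> Hn n \<and> (\<forall>i\<in>{1..n}. tH (zp n e k) i = k * tH e i)"
proof (cases "0 \<le> k")
  case True
  assume e: "e \<in> Hn n"
  then show ?thesis using Hn_pow[OF e, of "nat k"] True by (simp add: zp_def)
next
  case False
  assume e: "e \<in> Hn n"
  have ge: "ginv n e \<in> Hn n" "\<forall>i\<in>{1..n}. tH (ginv n e) i = - tH e i" using Hn_ginv[OF e] by auto
  show ?thesis using Hn_pow[OF ge(1), of "nat (- k)"] ge(2) False by (simp add: zp_def)
qed

lemma pow_commute: "(e::perm) \<circ> g = g \<circ> e \<Longrightarrow> (e ^^ k) \<circ> g = g \<circ> (e ^^ k)"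
proof (induction k)
  case 0 then show ?case by simp
next
  case (Suc k)
  have "(e ^^ Suc k) \<circ> g = e \<circ> ((e ^^ k) \<circ> g)" by (simp add: comp_assoc)
  also have "\<dots> = e \<circ> (g \<circ> (e ^^ k))" by (simp only: Suc.IH[OF Suc.prems])
  also have "\<dots> = (e \<circ> g) \<circ> (e ^^ k)" by (simp only: comp_assoc)
  also have "\<dots> = (g \<circ> e) \<circ> (e ^^ k)" by (simp only: Suc.prems)
  also have "\<dots> = g \<circ> (e ^^ Suc k)" by (simp add: comp_assoc)
  finally show ?case .
qed

lemma ginv_commute: "e \<in> SymX n \<Longrightarrow> e \<circ> g = g \<circ> e \<Longrightarrow> ginv n e \<circ> g = g \<circ> ginv n e"
proof -
  assume e: "e \<in> SymX n" and c: "e \<circ> g = g \<circ> e"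
  have "ginv n e \<circ> g = ginv n e \<circ> g \<circ> (e \<circ> ginv n e)" using ginv_right[OF e] by simp
  also have "\<dots> = ginv n e \<circ> (g \<circ> e) \<circ> ginv n e" by (simp add: comp_assoc)
  also have "\<dots> = ginv n e \<circ> (e \<circ> g) \<circ> ginv n e" using c by simp
  also have "\<dots> = (ginv n e \<circ> e) \<circ> g \<circ> ginv n e" by (simp add: comp_assoc)
  also have "\<dots> = g \<circ> ginv n e" using ginv_left[OF e] by simp
  finally show ?thesis .
qed

lemma zp_commute: "e \<in> SymX n \<Longrightarrow> e \<circ> g = g \<circ> e \<Longrightarrow> zp n e k \<circ> g = g \<circ> zp n e k"
  unfolding zp_def using pow_commute ginv_commute by auto

primrec Ep :: "nat \<Rightarrow> (nat \<Rightarrow> perm) \<Rightarrow> (nat \<Rightarrow> int) \<Rightarrow> nat list \<Rightarrow> perm" where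
  "Ep n e kk [] = id"
| "Ep n e kk (j # js) = zp n (e j) (kk j) \<circ> Ep n e kk js"

lemma Ep_props: "(\<forall>j\<in>set js. e j \<in> Hn n \<and> e j \<circ> g = g \<circ> e j) \<Longrightarrow>
  Ep n e kk js \<in> Hn n \<and> (\<forall>i\<in>{1..n}. tH (Ep n e kk js) i = (\<Sum>j\<leftarrow>js. kk j * tH (e j) i)) \<and>
  Ep n e kk js \<circ> g = g \<circ> Ep n e kk js"
proof (induction js)
  case Nil then show ?case using Hn_id[of n] by (simp add: id_def)
next
  case (Cons j js)
  have ej: "e j \<in> Hn n" "e j \<circ> g = g \<circ> e j" using Cons.prems by (auto simp: comp_def)
  have IH: "Ep n e kk js \<in> Hn n" "\<forall>i\<in>{1..n}. tH (Ep n e kk js) i = (\<Sum>j\<leftarrow>js. kk j * tH (e j) i)"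
     "Ep n e kk js \<circ> g = g \<circ> Ep n e kk js" using Cons by (auto simp: comp_def)
  have z: "zp n (e j) (kk j) \<in> Hn n" "\<forall>i\<in>{1..n}. tH (zp n (e j) (kk j)) i = kk j * tH (e j) i"
    using zp_Hn[OF ej(1)] by auto
  have zc: "zp n (e j) (kk j) \<circ> g = g \<circ> zp n (e j) (kk j)" by (rule zp_commute[OF Hn_SymX[OF ej(1)] ej(2)])
  have C: "zp n (e j) (kk j) \<circ> Ep n e kk js \<in> Hn n \<and>
     (\<forall>i\<in>{1..n}. tH (zp n (e j) (kk j) \<circ> Ep n e kk js) i = tH (Ep n e kk js) i + tH (zp n (e j) (kk j)) i)"
    by (rule Hn_comp[OF IH(1) z(1)])
  have "zp n (e j) (kk j) \<circ> Ep n e kk js \<circ> g = zp n (e j) (kk j) \<circ> (Ep n e kk js \<circ> g)" by (simp add: comp_assoc)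
  also have "\<dots> = (zp n (e j) (kk j) \<circ> g) \<circ> Ep n e kk js" using IH(3) by (simp add: comp_assoc)
  also have "\<dots> = g \<circ> (zp n (e j) (kk j) \<circ> Ep n e kk js)" using zc by (simp add: comp_assoc)
  finally have D: "zp n (e j) (kk j) \<circ> Ep n e kk js \<circ> g = g \<circ> (zp n (e j) (kk j) \<circ> Ep n e kk js)" .
  show ?case unfolding Ep.simps
  proof (intro conjI ballI)
    show "zp n (e j) (kk j) \<circ> Ep n e kk js \<in> Hn n" using C by blast
    show "zp n (e j) (kk j) \<circ> Ep n e kk js \<circ> g = g \<circ> (zp n (e j) (kk j) \<circ> Ep n e kk js)" by (rule D)
    fix i assume i: "i \<in> {1..n}"
    have "tH (zp n (e j) (kk j) \<circ> Ep n e kk js) i = tH (Ep n e kk js) i + tH (zp n (e j) (kk j)) i" using C i by blast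
    then show "tH (zp n (e j) (kk j) \<circ> Ep n e kk js) i = (\<Sum>j\<leftarrow>j # js. kk j * tH (e j) i)"
      using IH(2) z(2) i by simp
  qed
qed


lemma yinv_ginv: "2 \<le> j \<Longrightarrow> j \<le> n \<Longrightarrow> ginv n (yel j) = yinv j"
  by (rule ginv_unique'[OF yel_SymX yel_yinv])

lemma yinv_Hn: "2 \<le> j \<Longrightarrow> j \<le> n \<Longrightarrow> yinv j \<in> Hn n \<and> (\<forall>i\<in>{1..n}. tH (yinv j) i = - tH (yel j) i)"
  using Hn_ginv[OF yel_Hn[THEN conjunct1]] yinv_ginv by metis

lemma zip_map_self: "zip (map f xs) xs = map (\<lambda>x. (f x, x)) xs"
  by (induction xs) auto

lemma sum_js: "(\<Sum>j\<leftarrow>[2..<Suc n]. f j) = (\<Sum>j\<in>{2..n}. f j)"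
proof -
  have "(\<Sum>j\<leftarrow>[2..<Suc n]. f j) = sum f (set [2..<Suc n])"
    by (rule sum_list_distinct_conv_sum_set) simp
  also have "set [2..<Suc n] = {2..n}" by auto
  finally show ?thesis .
qed

lemma index_identity:
  assumes z: "z \<in> Hn n" and n2: "2 \<le> n" and i: "i \<in> {1..n}"
  shows "(\<Sum>j\<in>{2..n}. tH z j * tH (yel j) i) + tH z i = 0"
proof -
  have t: "tH (yel j) i = (if i = 1 then 1 else if i = j then -1 else 0)" if "j \<in> {2..n}" for j
    using yel_Hn[of j n] that i by auto
  show ?thesis
  proof (cases "i = 1")
    case True
    have "(\<Sum>j\<in>{2..n}. tH z j * tH (yel j) i) = (\<Sum>j\<in>{2..n}. tH z j)"
      using t True by (intro sum.cong) auto
    moreover have "{1..n} = insert 1 {2..n}" using n2 by auto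
    then have "(\<Sum>j\<in>{1..n}. tH z j) = tH z 1 + (\<Sum>j\<in>{2..n}. tH z j)" by simp
    ultimately show ?thesis using Hn_index[OF z] True by simp
  next
    case False
    then have i2: "i \<in> {2..n}" using i by auto
    have "(\<Sum>j\<in>{2..n}. tH z j * tH (yel j) i) = (\<Sum>j\<in>{2..n}. if j = i then - tH z j else 0)"
      using t False by (intro sum.cong) auto
    also have "\<dots> = - tH z i" using i2 by (simp add: sum.delta')
    finally show ?thesis by simp
  qed
qed

lemma core:
  fixes n m :: nat and g z :: perm and vw viw :: "nat \<Rightarrow> letter list" and gens :: "perm list"
  assumes n2: "2 \<le> n"
    and vw: "\<forall>j\<in>{2..n}. word_eval n gens (vw j) = yel j"
    and viw: "\<forall>j\<in>{2..n}. word_eval n gens (viw j) = yinv j"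
    and z: "z \<in> Hn n"
    and cj: "\<forall>j\<in>{2..n}. \<exists>c\<in>Hstar n g. c \<circ> g \<circ> ginv n c = (yel j ^^ Suc m) \<circ> g \<circ> (yinv j ^^ Suc m)"
  shows "\<exists>c < Suc m ^ length [2..<Suc n]. \<exists>x\<in>Hstar n g. x \<circ> g \<circ> ginv n x =
     word_eval n gens (Wl vw [2..<Suc n] c (Suc m)) \<circ> (z \<circ> g \<circ> ginv n z) \<circ> word_eval n gens (Wil viw [2..<Suc n] c (Suc m))"
proof -
  define js where "js = [2..<Suc n]"
  define M where "M = Suc m"
  have setjs: "set js = {2..n}" unfolding js_def by auto
  have sumjs: "(\<Sum>j\<leftarrow>js. f j) = (\<Sum>j\<in>{2..n}. f j)" for f :: "nat \<Rightarrow> int"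
    unfolding js_def by (rule sum_js)
  from cj obtain cc where cc: "\<And>j. j \<in> {2..n} \<Longrightarrow> cc j \<in> Hstar n g \<and> cc j \<circ> g \<circ> ginv n (cc j) = (yel j ^^ M) \<circ> g \<circ> (yinv j ^^ M)"
    unfolding M_def by metis
  have ccH: "cc j \<in> Hn n" if "j \<in> {2..n}" for j using cc[OF that] unfolding Hstar_def by blast
  define s where "s i = tH z i" for i
  define a where "a j = nat (s j mod int M)" for j
  define kk where "kk j = (int (a j) - s j) div int M" for j
  have aM: "a j < M" for j unfolding a_def M_def by (simp add: nat_less_iff)
  have akk: "int (a j) - int M * kk j = s j" for j
  proof -
    have "int (a j) = s j mod int M" unfolding a_def M_def by simp
    moreover have "int M dvd (s j mod int M - s j)" using mod_eq_dvd_iff[of "s j mod int M" "int M" "s j"] by simp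
    ultimately show ?thesis unfolding kk_def by simp
  qed
  define e where "e j = (yinv j ^^ M) \<circ> cc j" for j
  have eH: "e j \<in> Hn n \<and> (\<forall>i\<in>{1..n}. tH (e j) i = tH (cc j) i - int M * tH (yel j) i)" if j: "j \<in> {2..n}" for j
  proof -
    have yi: "yinv j \<in> Hn n" "\<forall>i\<in>{1..n}. tH (yinv j) i = - tH (yel j) i" using yinv_Hn j by auto
    have p: "yinv j ^^ M \<in> Hn n" "\<forall>i\<in>{1..n}. tH (yinv j ^^ M) i = int M * tH (yinv j) i" using Hn_pow[OF yi(1)] by auto
    have C: "e j \<in> Hn n \<and> (\<forall>i\<in>{1..n}. tH (e j) i = tH (cc j) i + tH (yinv j ^^ M) i)"
      unfolding e_def by (rule Hn_comp[OF ccH[OF j] p(1)])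
    then show ?thesis using p(2) yi(2) by simp
  qed
  have ec: "e j \<circ> g = g \<circ> e j" if j: "j \<in> {2..n}" for j
  proof -
    let ?Y = "yel j ^^ M" and ?Yi = "yinv j ^^ M" and ?c = "cc j"
    have cS: "?c \<in> SymX n" using ccH[OF j] Hn_SymX by blast
    have YY: "?Yi \<circ> ?Y = id" using j by (intro funpow_inv yinv_yel) auto
    have cg: "?c \<circ> g \<circ> ginv n ?c = ?Y \<circ> g \<circ> ?Yi" using cc[OF j] by blast
    have "e j \<circ> g = ?Yi \<circ> (?c \<circ> g \<circ> (ginv n ?c \<circ> ?c))" unfolding e_def ginv_left[OF cS] by (simp add: comp_assoc)
    also have "\<dots> = ?Yi \<circ> (?c \<circ> g \<circ> ginv n ?c) \<circ> ?c" by (simp add: comp_assoc)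
    also have "\<dots> = ?Yi \<circ> (?Y \<circ> g \<circ> ?Yi) \<circ> ?c" by (simp only: cg)
    also have "\<dots> = (?Yi \<circ> ?Y) \<circ> g \<circ> ?Yi \<circ> ?c" by (simp add: comp_assoc)
    also have "\<dots> = g \<circ> e j" unfolding YY e_def by (simp add: comp_assoc)
    finally show ?thesis .
  qed
  define as where "as = map a js"
  define c where "c = ed as M"
  have cless: "c < M ^ length js" unfolding c_def as_def using ed_less[of "map a js" M] aM by simp
  define Yc where "Yc = word_eval n gens (Wl vw js c M)"
  define Yic where "Yic = word_eval n gens (Wil viw js c M)"
  have vw': "\<forall>j\<in>set js. 2 \<le> j \<and> j \<le> n \<and> word_eval n gens (vw j) = yel j" using vw setjs by auto
  have YcH: "Yc \<in> Hn n" unfolding Yc_def by (rule Wl_Hn[OF vw'])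
  have YicYc: "Yic \<circ> Yc = id" unfolding Yic_def Yc_def
    by (rule Wil_Wl) (use vw viw setjs yinv_yel in auto)
  have gYc: "ginv n Yc = Yic" by (rule ginv_unique[OF Hn_SymX[OF YcH] YicYc])
  define Ep' where "Ep' = Ep n e kk js"
  have EpP: "Ep' \<in> Hn n \<and> (\<forall>i\<in>{1..n}. tH Ep' i = (\<Sum>j\<leftarrow>js. kk j * tH (e j) i)) \<and> Ep' \<circ> g = g \<circ> Ep'"
    unfolding Ep'_def by (rule Ep_props) (use eH ec setjs in auto)
  define x where "x = Yc \<circ> (z \<circ> Ep')"
  have zE: "z \<circ> Ep' \<in> Hn n \<and> (\<forall>i\<in>{1..n}. tH (z \<circ> Ep') i = tH Ep' i + tH z i)"
    using Hn_comp[of Ep' n z] EpP z by blast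
  have xH: "x \<in> Hn n \<and> (\<forall>i\<in>{1..n}. tH x i = tH (z \<circ> Ep') i + tH Yc i)"
    unfolding x_def using Hn_comp[of "z \<circ> Ep'" n Yc] zE YcH by blast
  have conj: "x \<circ> g \<circ> ginv n x = Yc \<circ> (z \<circ> g \<circ> ginv n z) \<circ> Yic"
  proof -
    have ES: "Ep' \<in> SymX n" using EpP Hn_SymX by blast
    have zS: "z \<in> SymX n" using z Hn_SymX by blast
    have gx: "ginv n x = ginv n Ep' \<circ> ginv n z \<circ> Yic"
      unfolding x_def using ginv_comp[OF comp_SymX[OF ES zS] Hn_SymX[OF YcH]] ginv_comp[OF ES zS] gYc by simp
    have "Ep' \<circ> g \<circ> ginv n Ep' = g"
    proof -
      have "Ep' \<circ> g \<circ> ginv n Ep' = g \<circ> (Ep' \<circ> ginv n Ep')" using EpP by (simp add: comp_assoc)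
      then show ?thesis using ginv_right[OF ES] by simp
    qed
    have "x \<circ> g \<circ> ginv n x = Yc \<circ> z \<circ> (Ep' \<circ> g \<circ> ginv n Ep') \<circ> ginv n z \<circ> Yic"
      by (subst gx) (simp add: x_def comp_assoc)
    also have "\<dots> = Yc \<circ> (z \<circ> g \<circ> ginv n z) \<circ> Yic" using \<open>Ep' \<circ> g \<circ> ginv n Ep' = g\<close> by (simp add: comp_assoc)
    finally show ?thesis .
  qed
  have xS: "x \<in> Hstar n g"
  proof -
    have "\<bar>int (perm_order (sigma_of n g)) * t_orb n g i\<bar> dvd tH x i" if iI: "i \<in> Iset n g" for i
    proof -
      let ?D = "\<bar>int (perm_order (sigma_of n g)) * t_orb n g i\<bar>"
      have i: "i \<in> {1..n}" using iI unfolding Iset_def by blast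
      have tYc: "tH Yc i = (\<Sum>j\<leftarrow>js. int (a j) * tH (yel j) i)"
        unfolding Yc_def c_def as_def
        using Wl_tH[OF vw', of "map a js" M i] aM i by (simp add: zip_map_self comp_def)
      have tEp: "tH Ep' i = (\<Sum>j\<leftarrow>js. kk j * (tH (cc j) i - int M * tH (yel j) i))"
      proof -
        have "tH Ep' i = (\<Sum>j\<leftarrow>js. kk j * tH (e j) i)" using EpP i by blast
        also have "\<dots> = (\<Sum>j\<leftarrow>js. kk j * (tH (cc j) i - int M * tH (yel j) i))"
        proof (rule arg_cong[where f=sum_list], rule map_cong[OF refl])
          fix j assume "j \<in> set js"
          then have "j \<in> {2..n}" using setjs by simp
          then show "kk j * tH (e j) i = kk j * (tH (cc j) i - int M * tH (yel j) i)" using eH i by auto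
        qed
        finally show ?thesis .
      qed
      have "tH x i = tH Ep' i + s i + tH Yc i" using xH zE i s_def by simp
      also have "\<dots> = (\<Sum>j\<in>{2..n}. kk j * tH (cc j) i) + ((\<Sum>j\<in>{2..n}. (int (a j) - int M * kk j) * tH (yel j) i) + s i)"
        unfolding tEp tYc sumjs by (simp add: algebra_simps sum.distrib sum_subtractf)
      also have "(\<Sum>j\<in>{2..n}. (int (a j) - int M * kk j) * tH (yel j) i) + s i = 0"
        unfolding akk s_def by (rule index_identity[OF z n2 i])
      finally have tx: "tH x i = (\<Sum>j\<in>{2..n}. kk j * tH (cc j) i)" by simp
      have "?D dvd tH (cc j) i" if "j \<in> {2..n}" for j using cc[OF that] iI unfolding Hstar_def by blast
      then have "?D dvd (\<Sum>j\<in>{2..n}. kk j * tH (cc j) i)" by (intro dvd_sum dvd_mult) auto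
      then show ?thesis using tx by simp
    qed
    then show ?thesis using xH unfolding Hstar_def by blast
  qed
  show ?thesis
    using cless xS conj unfolding M_def js_def Yc_def Yic_def by blast
qed


lemma M_exists:
  assumes g: "g \<in> Gn n"
  shows "\<exists>m. \<forall>j\<in>{2..n}. (yel j ^^ Suc m) \<in> Hstar n g"
proof -
  let ?D = "\<lambda>i. \<bar>int (perm_order (sigma_of n g)) * t_orb n g i\<bar>"
  have ord: "0 < perm_order (sigma_of n g)" by (rule perm_order_pos[OF sigma_of_permutes[OF g]])
  have fin: "finite (Iset n g)" unfolding Iset_def by auto
  have Dpos: "0 < ?D i" if "i \<in> Iset n g" for i using that ord unfolding Iset_def by auto
  define M where "M = (\<Prod>i\<in>Iset n g. nat (?D i))"
  have M0: "0 < M" unfolding M_def using Dpos by (intro prod_pos) auto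
  have intM: "int M = (\<Prod>i\<in>Iset n g. ?D i)" unfolding M_def by (simp add: of_nat_prod)
  have Ddvd: "?D i dvd int M" if "i \<in> Iset n g" for i unfolding intM using fin that by (rule dvd_prodI)
  have "yel j ^^ M \<in> Hstar n g" if j: "j \<in> {2..n}" for j
  proof -
    have y: "yel j \<in> Hn n" using yel_Hn j by auto
    have p: "yel j ^^ M \<in> Hn n" "\<forall>i\<in>{1..n}. tH (yel j ^^ M) i = int M * tH (yel j) i" using Hn_pow[OF y] by auto
    have "?D i dvd tH (yel j ^^ M) i" if "i \<in> Iset n g" for i
    proof -
      have "i \<in> {1..n}" using that unfolding Iset_def by blast
      then show ?thesis using p(2) Ddvd[OF that] by simp
    qed
    then show ?thesis unfolding Hstar_def using p(1) by blast
  qed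
  moreover have "Suc (M - 1) = M" using M0 by simp
  ultimately show ?thesis by (intro exI[of _ "M - 1"]) simp
qed

lemma pe_mem: "prod_encode (p, q) \<in> {prod_encode (enc_word w1, enc_word w2) | w1 w2. P w1 w2} \<longleftrightarrow> P (dec p) (dec q)"
proof
  assume "prod_encode (p, q) \<in> {prod_encode (enc_word w1, enc_word w2) | w1 w2. P w1 w2}"
  then obtain w1 w2 where "prod_encode (p, q) = prod_encode (enc_word w1, enc_word w2)" "P w1 w2" by blast
  then have "p = enc_word w1" "q = enc_word w2" using prod_encode_eq by auto
  then show "P (dec p) (dec q)" using \<open>P w1 w2\<close> by simp
next
  assume "P (dec p) (dec q)"
  then show "prod_encode (p, q) \<in> {prod_encode (enc_word w1, enc_word w2) | w1 w2. P w1 w2}"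
    by (intro CollectI exI[of _ "dec p"] exI[of _ "dec q"]) simp
qed

lemma mem_decode: "x \<in> {prod_encode (enc_word w1, enc_word w2) | w1 w2. P w1 w2} \<longleftrightarrow>
   P (dec (fst (prod_decode x))) (dec (snd (prod_decode x)))"
  using pe_mem[of "fst (prod_decode x)" "snd (prod_decode x)" P] by (simp add: prod_decode_inverse)

lemma rf_prodlist: "(\<And>j. j \<in> set js \<Longrightarrow> rf k (F j)) \<Longrightarrow> rf k (\<lambda>xs. prod_list (map (\<lambda>j. F j xs) js))"
proof (induction js)
  case Nil then show ?case by (simp add: rf_const)
next
  case (Cons j js) then show ?case by (simp add: rf_mult)
qed


lemma prod_list_nz: "prod_list (map f xs) \<noteq> (0::nat) \<longleftrightarrow> (\<forall>x\<in>set xs. f x \<noteq> 0)"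
  by (induction xs) auto

lemma PA_cw:
  assumes gen: "generating_list n gens" and v1: "valid_word gens w1"
    and vwj: "valid_word gens v" "word_eval n gens v = yel j"
    and viwj: "valid_word gens vi" "word_eval n gens vi = yinv j"
    and j: "2 \<le> j" "j \<le> n"
    and H: "yel j ^^ M \<in> Hstar n (word_eval n gens w1)"
  shows "valid_word gens (concat (replicate M vi) @ w1 @ concat (replicate M v)) \<and>
     (\<exists>x \<in> Hstar n (word_eval n gens w1). gmul (gmul (ginv n x) (word_eval n gens w1)) x =
        word_eval n gens (concat (replicate M vi) @ w1 @ concat (replicate M v)))"
proof -
  let ?g = "word_eval n gens w1"
  have xS: "yel j ^^ M \<in> SymX n" using H unfolding Hstar_def using Hn_SymX by blast
  have gi: "ginv n (yel j ^^ M) = yinv j ^^ M"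
    by (rule ginv_unique'[OF xS funpow_inv[OF yel_yinv]]) (use j in simp)
  have "word_eval n gens (concat (replicate M vi) @ w1 @ concat (replicate M v)) = (yel j ^^ M) \<circ> ?g \<circ> (yinv j ^^ M)"
    by (simp only: we_append we_rep vwj(2) viwj(2) comp_assoc)
  then have "gmul (gmul (ginv n (yel j ^^ M)) ?g) (yel j ^^ M) = word_eval n gens (concat (replicate M vi) @ w1 @ concat (replicate M v))"
    unfolding gmul_def gi by (simp add: comp_assoc)
  moreover have "valid_word gens (concat (replicate M vi) @ w1 @ concat (replicate M v))"
    using v1 vwj viwj by (simp add: valid_rep)
  ultimately show ?thesis using H by blast
qed

lemma PA_self:
  assumes v1: "valid_word gens w1"
  shows "\<exists>x \<in> Hstar n (word_eval n gens w1). gmul (gmul (ginv n x) (word_eval n gens w1)) x = word_eval n gens w1"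
proof -
  have "id \<in> Hstar n (word_eval n gens w1)" unfolding Hstar_def using Hn_id[of n] by auto
  moreover have "gmul (gmul (ginv n id) (word_eval n gens w1)) id = word_eval n gens w1"
    by (simp add: gmul_def ginv_id)
  ultimately show ?thesis by blast
qed


theorem lemma4p11:
  fixes n :: nat and gens :: "perm list"
  assumes "2 \<le> n"
    and "generating_list n gens"
    and "decidable_pairs (\<lambda>w1 w2. valid_word gens w1 \<and> valid_word gens w2 \<and>
           (\<exists>x \<in> Hstar n (word_eval n gens w1).
              gmul (gmul (ginv n x) (word_eval n gens w1)) x = word_eval n gens w2))"
  shows "decidable_pairs (\<lambda>w1 w2. valid_word gens w1 \<and> valid_word gens w2 \<and>
           (\<exists>x \<in> Hn n.
              gmul (gmul (ginv n x) (word_eval n gens w1)) x = word_eval n gens w2))"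
proof -
  note n2 = assms(1) and gen = assms(2)
  define PA where "PA = (\<lambda>w1 w2. valid_word gens w1 \<and> valid_word gens w2 \<and>
           (\<exists>x \<in> Hstar n (word_eval n gens w1).
              gmul (gmul (ginv n x) (word_eval n gens w1)) x = word_eval n gens w2))"
  define PB where "PB = (\<lambda>w1 w2. valid_word gens w1 \<and> valid_word gens w2 \<and>
           (\<exists>x \<in> Hn n.
              gmul (gmul (ginv n x) (word_eval n gens w1)) x = word_eval n gens w2))"
  define SA where "SA = {prod_encode (enc_word w1, enc_word w2) | w1 w2. PA w1 w2}"
  define SB where "SB = {prod_encode (enc_word w1, enc_word w2) | w1 w2. PB w1 w2}"
  from assms(3) obtain FA where FA: "\<forall>x. reval FA [x] (if x \<in> SA then 1 else 0)"
    unfolding decidable_pairs_def decidable_set_def SA_def PA_def by blast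
  define chi where "chi y = (if y \<in> SA then 1 else (0::nat))" for y
  have rfchi: "rf (Suc 0) (\<lambda>xs. chi (xs!0))"
    unfolding rf_def
  proof (intro exI[of _ FA] allI impI)
    fix xs :: "nat list" assume "length xs = Suc 0"
    then obtain y where "xs = [y]" by (auto simp: length_Suc_conv)
    then show "reval FA xs (chi (xs!0))" using FA unfolding chi_def by simp
  qed
  have rfchi': "rf k f \<Longrightarrow> rf k (\<lambda>xs. chi (f xs))" for k f
    using rf_comp1[OF rfchi, of k f] by simp
  have chiA: "chi (prod_encode (p, q)) = (if PA (dec p) (dec q) then 1 else 0)" for p q
    unfolding chi_def SA_def using pe_mem[of p q PA] by simp
  have "\<forall>j. \<exists>w. j \<in> {2..n} \<longrightarrow> valid_word gens w \<and> word_eval n gens w = yel j"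
  proof
    fix j show "\<exists>w. j \<in> {2..n} \<longrightarrow> valid_word gens w \<and> word_eval n gens w = yel j"
    proof (cases "j \<in> {2..n}")
      case True
      then have "yel j \<in> Gn n" using yel_Hn Hn_Gn by auto
      then show ?thesis using gen unfolding generating_list_def by blast
    qed auto
  qed
  then obtain vw where vw: "\<And>j. j \<in> {2..n} \<Longrightarrow> valid_word gens (vw j) \<and> word_eval n gens (vw j) = yel j"
    by (rule choice[THEN exE]) blast
  have "\<forall>j. \<exists>w. j \<in> {2..n} \<longrightarrow> valid_word gens w \<and> word_eval n gens w = yinv j"
  proof
    fix j show "\<exists>w. j \<in> {2..n} \<longrightarrow> valid_word gens w \<and> word_eval n gens w = yinv j"
    proof (cases "j \<in> {2..n}")
      case True
      then have "yinv j \<in> Gn n" using yinv_Hn Hn_Gn by auto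
      then show ?thesis using gen unfolding generating_list_def by blast
    qed auto
  qed
  then obtain viw where viw: "\<And>j. j \<in> {2..n} \<Longrightarrow> valid_word gens (viw j) \<and> word_eval n gens (viw j) = yinv j"
    by (rule choice[THEN exE]) blast
  define js where "js = [2..<Suc n]"
  define r where "r = length js"
  have setjs: "set js = {2..n}" unfolding js_def by auto
  define p1 where "p1 x = fst (prod_decode x)" for x
  define p2 where "p2 x = snd (prod_decode x)" for x
  define cw where "cw j m x = concat (replicate (Suc m) (viw j)) @ dec (p1 x) @ concat (replicate (Suc m) (vw j))" for j m x
  define F where "F j xs = chi (prod_encode (p1 (xs!1), enc_word (cw j (xs!0) (xs!1))))" for j xs
  have rfF: "rf (Suc (Suc 0)) (F j)" for j
  proof -
    have "rf (Suc (Suc 0)) (\<lambda>xs. chi (prod_encode (fst (prod_decode (xs!1)),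
        appc (enc_word (concat (replicate (Suc (xs!0)) (viw j)))) (appc (fst (prod_decode (xs!1))) (enc_word (concat (replicate (Suc (xs!0)) (vw j))))))))"
      by (rule rfchi'[OF rf_pe[OF rf_fst[OF rf_p1] rf_appc[OF rf_rep[OF rf_succ[OF rf_p0]] rf_appc[OF rf_fst[OF rf_p1] rf_rep[OF rf_succ[OF rf_p0]]]]]])
    moreover have "F j = (\<lambda>xs. chi (prod_encode (fst (prod_decode (xs!1)),
        appc (enc_word (concat (replicate (Suc (xs!0)) (viw j)))) (appc (fst (prod_decode (xs!1))) (enc_word (concat (replicate (Suc (xs!0)) (vw j))))))))"
      by (rule ext) (simp only: F_def cw_def enc_append enc_dec p1_def)
    ultimately show ?thesis by simp
  qed
  define cond where "cond xs = (1 - prod_list (map (\<lambda>j. F j xs) js)) * chi (prod_encode (p1 (xs!1), p1 (xs!1)))" for xs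
  have rfcond: "rf (Suc (Suc 0)) cond"
  proof -
    have "rf (Suc (Suc 0)) (\<lambda>xs. (1 - prod_list (map (\<lambda>j. F j xs) js)) * chi (prod_encode (fst (prod_decode (xs!1)), fst (prod_decode (xs!1)))))"
      by (rule rf_mult[OF rf_sub[OF rf_const rf_prodlist[OF rfF]] rfchi'[OF rf_pe[OF rf_fst[OF rf_p1] rf_fst[OF rf_p1]]]])
    then show ?thesis unfolding cond_def[abs_def] p1_def by simp
  qed
  have Fval: "F j [m, x] = (if PA (dec (p1 x)) (cw j m x) then 1 else 0)" for j m x
    unfolding F_def using chiA by simp
  have cond_iff: "cond [m, x] = 0 \<longleftrightarrow> \<not> PA (dec (p1 x)) (dec (p1 x)) \<or> (\<forall>j\<in>set js. PA (dec (p1 x)) (cw j m x))" for m x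
  proof -
    have "cond [m, x] = 0 \<longleftrightarrow> prod_list (map (\<lambda>j. F j [m, x]) js) \<noteq> 0 \<or> chi (prod_encode (p1 x, p1 x)) = 0"
      unfolding cond_def by auto
    also have "\<dots> \<longleftrightarrow> (\<forall>j\<in>set js. F j [m, x] \<noteq> 0) \<or> \<not> PA (dec (p1 x)) (dec (p1 x))"
      unfolding prod_list_nz chiA by simp
    also have "\<dots> \<longleftrightarrow> \<not> PA (dec (p1 x)) (dec (p1 x)) \<or> (\<forall>j\<in>set js. PA (dec (p1 x)) (cw j m x))"
      unfolding Fval by auto
    finally show ?thesis .
  qed
  have cond_ex: "\<exists>m. cond [m, x] = 0" for x
  proof (cases "PA (dec (p1 x)) (dec (p1 x))")
    case False then show ?thesis using cond_iff by blast
  next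
    case True
    let ?w1 = "dec (p1 x)"
    have v1: "valid_word gens ?w1" using True unfolding PA_def by blast
    have "word_eval n gens ?w1 \<in> Gn n" by (rule we_Gn[OF gen v1])
    then obtain m where m: "\<forall>j\<in>{2..n}. (yel j ^^ Suc m) \<in> Hstar n (word_eval n gens ?w1)"
      using M_exists by blast
    have "PA ?w1 (cw j m x)" if j: "j \<in> set js" for j
    proof -
      have j': "j \<in> {2..n}" using j setjs by simp
      show ?thesis unfolding PA_def cw_def
        using PA_cw[OF gen v1 _ _ _ _ _ _ bspec[OF m j']] vw[OF j'] viw[OF j'] v1 j' by auto
    qed
    then show ?thesis using cond_iff by blast
  qed
  define mstar where "mstar x = (LEAST m. cond [m, x] = 0)" for x
  have rfm: "rf (Suc 0) (\<lambda>xs. mstar (xs!0))"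
  proof -
    have "rf (Suc 0) (\<lambda>xs. LEAST m. cond (m # xs) = 0)"
    proof (rule rf_mn[OF rfcond])
      fix xs :: "nat list" assume "length xs = Suc 0"
      then obtain y where "xs = [y]" by (auto simp: length_Suc_conv)
      then show "\<exists>m. cond (m # xs) = 0" using cond_ex by simp
    qed
    then show ?thesis by (rule rf_cong) (auto simp: mstar_def length_Suc_conv)
  qed
  have rfm': "rf k f \<Longrightarrow> rf k (\<lambda>xs. mstar (f xs))" for k f using rf_comp1[OF rfm, of k f] by simp
  have mspec: "cond [mstar x, x] = 0" for x unfolding mstar_def using cond_ex by (rule LeastI_ex)
  define M where "M x = Suc (mstar x)" for x
  define cq where "cq c x = Wil viw js c (M x) @ dec (p2 x) @ Wl vw js c (M x)" for c x
  define f2 where "f2 xs = (if M (xs!1) ^ r \<le> xs!0 then 0 else 1 - chi (prod_encode (p1 (xs!1), enc_word (cq (xs!0) (xs!1)))))" for xs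
  have rfWl: "rf k f \<Longrightarrow> rf k g \<Longrightarrow> rf k (\<lambda>xs. enc_word (Wl vw js (f xs) (Suc (g xs))))" for k f g
    using rf_comp2[OF rf_Wl, of k f g] by simp
  have rfWil: "rf k f \<Longrightarrow> rf k g \<Longrightarrow> rf k (\<lambda>xs. enc_word (Wil viw js (f xs) (Suc (g xs))))" for k f g
    using rf_comp2[OF rf_Wil, of k f g] by simp
  have rff2: "rf (Suc (Suc 0)) f2"
  proof -
    have "rf (Suc (Suc 0)) (\<lambda>xs. if Suc (mstar (xs!1)) ^ r \<le> xs!0 then 0 else 1 - chi (prod_encode (fst (prod_decode (xs!1)),
       appc (enc_word (Wil viw js (xs!0) (Suc (mstar (xs!1))))) (appc (snd (prod_decode (xs!1))) (enc_word (Wl vw js (xs!0) (Suc (mstar (xs!1)))))))))"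
      by (rule rf_le[OF rf_pow[OF rf_succ[OF rfm'[OF rf_p1]] rf_const] rf_p0 rf_const
            rf_sub[OF rf_const rfchi'[OF rf_pe[OF rf_fst[OF rf_p1] rf_appc[OF rfWil[OF rf_p0 rfm'[OF rf_p1]] rf_appc[OF rf_snd[OF rf_p1] rfWl[OF rf_p0 rfm'[OF rf_p1]]]]]]]])
    moreover have "f2 = (\<lambda>xs. if Suc (mstar (xs!1)) ^ r \<le> xs!0 then 0 else 1 - chi (prod_encode (fst (prod_decode (xs!1)),
       appc (enc_word (Wil viw js (xs!0) (Suc (mstar (xs!1))))) (appc (snd (prod_decode (xs!1))) (enc_word (Wl vw js (xs!0) (Suc (mstar (xs!1)))))))))"
      by (rule ext) (simp only: f2_def cq_def M_def enc_append enc_dec p1_def p2_def)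
    ultimately show ?thesis by simp
  qed
  have f2_ex: "\<exists>c. f2 [c, x] = 0" for x by (intro exI[of _ "M x ^ r"]) (simp add: f2_def)
  define cstar where "cstar x = (LEAST c. f2 [c, x] = 0)" for x
  have rfc: "rf (Suc 0) (\<lambda>xs. cstar (xs!0))"
  proof -
    have "rf (Suc 0) (\<lambda>xs. LEAST c. f2 (c # xs) = 0)"
    proof (rule rf_mn[OF rff2])
      fix xs :: "nat list" assume "length xs = Suc 0"
      then obtain y where "xs = [y]" by (auto simp: length_Suc_conv)
      then show "\<exists>c. f2 (c # xs) = 0" using f2_ex by simp
    qed
    then show ?thesis by (rule rf_cong) (auto simp: cstar_def length_Suc_conv)
  qed
  define out where "out x = (if M x ^ r \<le> cstar x then 0 else (1::nat))" for x
  have rfout: "rf (Suc 0) (\<lambda>xs. out (xs!0))"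
  proof -
    have "rf (Suc 0) (\<lambda>xs. if Suc (mstar (xs!0)) ^ r \<le> cstar (xs!0) then 0 else 1)"
      by (rule rf_le[OF rf_pow[OF rf_succ[OF rfm] rf_const] rfc rf_const rf_const])
    then show ?thesis unfolding out_def M_def by simp
  qed
  have vw': "\<forall>j\<in>set js. 2 \<le> j \<and> j \<le> n \<and> word_eval n gens (vw j) = yel j" using vw setjs by auto
  have correct: "out x = (if x \<in> SB then 1 else 0)" for x
  proof -
    define w1 where "w1 = dec (p1 x)"
    define w2 where "w2 = dec (p2 x)"
    define g where "g = word_eval n gens w1"
    define h where "h = word_eval n gens w2"
    have SBx: "x \<in> SB \<longleftrightarrow> PB w1 w2" unfolding SB_def w1_def w2_def p1_def p2_def by (rule mem_decode)
    have f2v: "f2 [c, x] = 0 \<longleftrightarrow> M x ^ r \<le> c \<or> PA w1 (cq c x)" for c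
      unfolding f2_def using chiA[of "p1 x" "enc_word (cq c x)"] by (auto simp: w1_def)
    have A: "out x = 1 \<longleftrightarrow> (\<exists>c < M x ^ r. PA w1 (cq c x))"
    proof
      assume "out x = 1"
      then have lt: "cstar x < M x ^ r" unfolding out_def by (auto split: if_splits)
      have "f2 [cstar x, x] = 0" unfolding cstar_def using f2_ex by (rule LeastI_ex)
      then show "\<exists>c < M x ^ r. PA w1 (cq c x)" using lt f2v by auto
    next
      assume "\<exists>c < M x ^ r. PA w1 (cq c x)"
      then obtain c where c: "c < M x ^ r" "PA w1 (cq c x)" by blast
      then have "f2 [c, x] = 0" using f2v by blast
      then have "cstar x \<le> c" unfolding cstar_def by (rule Least_le)
      then show "out x = 1" using c unfolding out_def by simp
    qed
    have Wrel: "word_eval n gens (Wil viw js c (M x)) \<circ> word_eval n gens (Wl vw js c (M x)) = id" for c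
      by (rule Wil_Wl) (use vw viw setjs yinv_yel in auto)
    have B: "(\<exists>c < M x ^ r. PA w1 (cq c x)) \<longleftrightarrow> PB w1 w2"
    proof
      assume "\<exists>c < M x ^ r. PA w1 (cq c x)"
      then obtain c where c: "PA w1 (cq c x)" by blast
      define Yc where "Yc = word_eval n gens (Wl vw js c (M x))"
      define Yic where "Yic = word_eval n gens (Wil viw js c (M x))"
      have v: "valid_word gens w1" "valid_word gens w2" using c unfolding PA_def cq_def w2_def by auto
      obtain x0 where x0: "x0 \<in> Hstar n g" "gmul (gmul (ginv n x0) g) x0 = word_eval n gens (cq c x)"
        using c unfolding PA_def g_def by blast
      have x0H: "x0 \<in> Hn n" using x0(1) unfolding Hstar_def by blast
      have eq: "word_eval n gens (cq c x) = Yc \<circ> h \<circ> Yic"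
        unfolding cq_def Yc_def Yic_def h_def w2_def by (simp only: we_append comp_assoc)
      have YcH: "Yc \<in> Hn n" unfolding Yc_def by (rule Wl_Hn[OF vw'])
      have YY: "Yic \<circ> Yc = id" unfolding Yic_def Yc_def by (rule Wrel)
      have gYc: "ginv n Yc = Yic" by (rule ginv_unique[OF Hn_SymX[OF YcH] YY])
      have YicH: "Yic \<in> Hn n" using Hn_ginv[OF YcH] gYc by simp
      have gYic: "ginv n Yic = Yc" using ginv_ginv[OF Hn_SymX[OF YcH]] gYc by simp
      define z where "z = Yic \<circ> x0"
      have zH: "z \<in> Hn n" unfolding z_def using Hn_comp[OF x0H YicH] by blast
      have gz: "ginv n z = ginv n x0 \<circ> Yc"
        unfolding z_def using ginv_comp[OF Hn_SymX[OF x0H] Hn_SymX[OF YicH]] gYic by simp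
      have "gmul (gmul (ginv n z) g) z = Yic \<circ> (x0 \<circ> g \<circ> ginv n x0) \<circ> Yc"
        unfolding conj_eq gz by (simp add: z_def comp_assoc gmul_def)
      also have "x0 \<circ> g \<circ> ginv n x0 = Yc \<circ> h \<circ> Yic" using x0(2) eq by (simp add: conj_eq)
      also have "Yic \<circ> (Yc \<circ> h \<circ> Yic) \<circ> Yc = (Yic \<circ> Yc) \<circ> h \<circ> (Yic \<circ> Yc)" by (simp add: comp_assoc)
      also have "\<dots> = h" unfolding YY by simp
      finally show "PB w1 w2" unfolding PB_def using v zH g_def h_def by blast
    next
      assume "PB w1 w2"
      then obtain z where v: "valid_word gens w1" "valid_word gens w2" and zH: "z \<in> Hn n"
        and zc: "gmul (gmul (ginv n z) g) z = h" unfolding PB_def g_def h_def by blast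
      have "PA w1 w1" unfolding PA_def using PA_self[OF v(1)] v(1) by blast
      then have allj: "\<forall>j\<in>set js. PA w1 (cw j (mstar x) x)" using mspec[of x] cond_iff w1_def by blast
      have cj: "\<forall>j\<in>{2..n}. \<exists>c\<in>Hstar n g. c \<circ> g \<circ> ginv n c = (yel j ^^ Suc (mstar x)) \<circ> g \<circ> (yinv j ^^ Suc (mstar x))"
      proof
        fix j assume j: "j \<in> {2..n}"
        then have "PA w1 (cw j (mstar x) x)" using allj setjs by auto
        then obtain c where c: "c \<in> Hstar n g" "gmul (gmul (ginv n c) g) c = word_eval n gens (cw j (mstar x) x)"
          unfolding PA_def g_def by blast
        have "word_eval n gens (cw j (mstar x) x) = (yel j ^^ Suc (mstar x)) \<circ> g \<circ> (yinv j ^^ Suc (mstar x))"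
          unfolding cw_def g_def w1_def using vw[OF j] viw[OF j] by (simp only: we_append we_rep comp_assoc)
        then show "\<exists>c\<in>Hstar n g. c \<circ> g \<circ> ginv n c = (yel j ^^ Suc (mstar x)) \<circ> g \<circ> (yinv j ^^ Suc (mstar x))"
          using c by (metis conj_eq)
      qed
      obtain c x0 where c: "c < Suc (mstar x) ^ length [2..<Suc n]" and x0: "x0 \<in> Hstar n g"
        and x0c: "x0 \<circ> g \<circ> ginv n x0 = word_eval n gens (Wl vw [2..<Suc n] c (Suc (mstar x))) \<circ> (z \<circ> g \<circ> ginv n z)
            \<circ> word_eval n gens (Wil viw [2..<Suc n] c (Suc (mstar x)))"
      proof -
        have vwc: "\<forall>j\<in>{2..n}. word_eval n gens (vw j) = yel j" using vw by blast
        have viwc: "\<forall>j\<in>{2..n}. word_eval n gens (viw j) = yinv j" using viw by blast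
        show ?thesis using core[OF n2 vwc viwc zH cj] that by blast
      qed
      have hz: "z \<circ> g \<circ> ginv n z = h" using zc by (simp add: conj_eq)
      have "word_eval n gens (cq c x) = word_eval n gens (Wl vw js c (M x)) \<circ> h \<circ> word_eval n gens (Wil viw js c (M x))"
        unfolding cq_def h_def w2_def by (simp only: we_append comp_assoc)
      then have "gmul (gmul (ginv n x0) g) x0 = word_eval n gens (cq c x)"
        using x0c hz unfolding conj_eq M_def js_def by simp
      moreover have "valid_word gens (cq c x)" unfolding cq_def w2_def[symmetric]
        using v(2) vw viw setjs by (auto intro!: valid_Wl valid_Wil)
      ultimately have "PA w1 (cq c x)" unfolding PA_def g_def using v(1) x0 g_def by blast
      moreover have "c < M x ^ r" using c unfolding M_def r_def js_def .
      ultimately show "\<exists>c < M x ^ r. PA w1 (cq c x)" by blast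
    qed
    show ?thesis using A B SBx unfolding out_def by auto
  qed
  show ?thesis
  proof -
    obtain FO where FO: "\<forall>xs. length xs = Suc 0 \<longrightarrow> reval FO xs (out (xs!0))" using rfout unfolding rf_def by blast
    have "\<forall>x. reval FO [x] (if x \<in> SB then 1 else 0)"
    proof
      fix x
      have "reval FO [x] (out ([x]!0))" using FO[rule_format, of "[x]"] by simp
      then show "reval FO [x] (if x \<in> SB then 1 else 0)" unfolding correct by simp
    qed
    then show ?thesis unfolding decidable_pairs_def decidable_set_def SB_def PB_def by blast
  qed

qed


end
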